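(* Let $a$ be a strongly regular scale factor (extended evenly to negative arguments), and suppose that either (i) $\dot a(0^+)=0$ and there is $\epsilon>0$ with $\ddot a(t)\ge0$ on $(0,\epsilon)$, or (ii) $\infty>\dot a(0^+)>0$. Then the partial derivative $\partial_\rho g_{\tau\tau}$ (which exists at every point of $D$) is continuous on $D$.
   Context: A function $a:[0,\infty)\to[0,\infty)$ is a regular scale factor if: (a) $a(0)=0$; (b) $a$ is increasing and continuous on $[0,\infty)$, twice continuously differentiable on $(0,\infty)$, with an inverse function on $[0,\infty)$; (c) $\frac{a(t)\ddot a(t)}{\dot a(t)^2}\le1$ for all $t>0$ (presupposing $\dot a(t)\ne0$). It is strongly regular if also $\frac{a\ddot a}{\dot a^2}\ge-K$ on $(0,\infty)$ for a constant $K\ge1$. $\dot a(0^+)=\lim_{t\to0^+}\dot a(t)$. Extend $a$ by $a(-t)=a(t)$. For $\tau>0$, $\rho_{\mathcal M_\tau}=\int_0^\tau\frac{a(t)}{\sqrt{a^2(\tau)-a^2(t)}}dt$ and $D=\{(\tau,\rho):\tau>0,\ 0<\rho<2\rho_{\mathcal M_\tau}\}$. For $(\tau,\rho)\in D$, $t_0(\tau,\rho)$ is the unique $t_0\in(-\tau,\tau)$ with $\rho=\int_{t_0}^\tau\frac{a(t)}{\sqrt{a^2(\tau)-a^2(t)}}dt$. For $0\le t_0<\tau$, $f(\tau,t_0)=\int_{t_0}^{\tau}\frac{\ddot a(t)}{\dot a(t)^2}\left(\frac{\sqrt{a^2(\tau)-a^2(t_0)}}{\sqrt{a^2(\tau)-a^2(t)}}-1\right)dt$;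 for $-\tau<t_0<0$, $f(\tau,t_0)=2f(\tau,0)-f(\tau,-t_0)$. Finally $g_{\tau\tau}(\tau,\rho)=-[1-\dot a(\tau)f(\tau,t_0(\tau,\rho))]^2$ on $D$. *)

theory Defs
  imports "HOL-Analysis.Analysis"
begin

text \<open>Regular scale factor a : [0,inf) -> [0,inf) (values of a on negative reals are irrelevant here).\<close>
definition regular_scale_factor :: "(real \<Rightarrow> real) \<Rightarrow> bool" where
  "regular_scale_factor a \<longleftrightarrow>
     a 0 = 0 \<and>
     (\<forall>t\<ge>0. a t \<ge> 0) \<and>
     strict_mono_on {0..} a \<and>
     continuous_on {0..} a \<and>
     (\<forall>t>0. a differentiable (at t)) \<and>
     (\<forall>t>0. deriv a differentiable (at t)) \<and>
     continuous_on {0<..} (deriv (deriv a)) \<and>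
     (\<forall>t>0. deriv a t \<noteq> 0 \<and>
            a t * deriv (deriv a) t / (deriv a t)\<^sup>2 \<le> 1)"

definition strongly_regular_scale_factor :: "(real \<Rightarrow> real) \<Rightarrow> bool" where
  "strongly_regular_scale_factor a \<longleftrightarrow>
     regular_scale_factor a \<and>
     (\<exists>K\<ge>1. \<forall>t>0. a t * deriv (deriv a) t / (deriv a t)\<^sup>2 \<ge> - K)"

definition rhoM :: "(real \<Rightarrow> real) \<Rightarrow> real \<Rightarrow> real" where
  "rhoM a \<tau> = integral {0..\<tau>} (\<lambda>t. a t / sqrt ((a \<tau>)\<^sup>2 - (a t)\<^sup>2))"

definition domD :: "(real \<Rightarrow> real) \<Rightarrow> (real \<times> real) set" where
  "domD a = {(\<tau>, \<rho>). \<tau> > 0 \<and> 0 < \<rho> \<and> \<rho> < 2 * rhoM a \<tau>}"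

definition t0 :: "(real \<Rightarrow> real) \<Rightarrow> real \<Rightarrow> real \<Rightarrow> real" where
  "t0 a \<tau> \<rho> = (THE s. -\<tau> < s \<and> s < \<tau> \<and>
      \<rho> = integral {s..\<tau>} (\<lambda>t. a t / sqrt ((a \<tau>)\<^sup>2 - (a t)\<^sup>2)))"

definition fpos :: "(real \<Rightarrow> real) \<Rightarrow> real \<Rightarrow> real \<Rightarrow> real" where
  "fpos a \<tau> s = integral {s..\<tau>} (\<lambda>t. deriv (deriv a) t / (deriv a t)\<^sup>2 *
      (sqrt ((a \<tau>)\<^sup>2 - (a s)\<^sup>2) / sqrt ((a \<tau>)\<^sup>2 - (a t)\<^sup>2) - 1))"

definition ff :: "(real \<Rightarrow> real) \<Rightarrow> real \<Rightarrow> real \<Rightarrow> real" where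
  "ff a \<tau> s = (if 0 \<le> s then fpos a \<tau> s else 2 * fpos a \<tau> 0 - fpos a \<tau> (- s))"

definition gtt :: "(real \<Rightarrow> real) \<Rightarrow> real \<Rightarrow> real \<Rightarrow> real" where
  "gtt a \<tau> \<rho> = - (1 - deriv a \<tau> * ff a \<tau> (t0 a \<tau> \<rho>))\<^sup>2"

end

theory Submission
  imports Defs
begin

locale SF =
  fixes a :: "real \<Rightarrow> real" and K L :: real
  assumes a0: "a 0 = 0"
  and smono: "strict_mono_on {0..} a"
  and contA: "continuous_on {0..} a"
  and even: "\<And>t. a (-t) = a t"
  and d1: "\<And>t. 0 < t \<Longrightarrow> (a has_real_derivative deriv a t) (at t)"
  and d2: "\<And>t. 0 < t \<Longrightarrow> (deriv a has_real_derivative deriv (deriv a) t) (at t)"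
  and c2: "continuous_on {0<..} (deriv (deriv a))"
  and pos1: "\<And>t. 0 < t \<Longrightarrow> deriv a t > 0"
  and Kbd: "\<And>t. 0 < t \<Longrightarrow> \<bar>deriv (deriv a) t / (deriv a t)\<^sup>2\<bar> \<le> K / a t"
  and K1: "K \<ge> 1"
  and Llim: "(deriv a \<longlongrightarrow> L) (at_right 0)"
  and L0: "L \<ge> 0"
  and elim: "((\<lambda>s. (a s)\<^sup>2 / deriv a s) \<longlongrightarrow> 0) (at_right 0)"
begin

lemma a_abs: "a \<bar>t\<bar> = a t"
  by (cases "t \<ge> 0") (simp_all add: even)

lemma a_nonneg: "a t \<ge> 0"
proof -
  have "a 0 \<le> a \<bar>t\<bar>"
  proof (cases "t = 0")
    case False
    then have "a 0 < a \<bar>t\<bar>" using smono unfolding strict_mono_on_def by simp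
    then show ?thesis by simp
  qed simp
  then show ?thesis using a0 a_abs by simp
qed

lemma a_less_iff: "a s < a t \<longleftrightarrow> \<bar>s\<bar> < \<bar>t\<bar>"
proof -
  have m: "\<And>x y. 0 \<le> x \<Longrightarrow> 0 \<le> y \<Longrightarrow> a x < a y \<longleftrightarrow> x < y"
  proof -
    fix x y :: real assume "0 \<le> x" "0 \<le> y"
    show "a x < a y \<longleftrightarrow> x < y"
    proof
      assume h: "a x < a y"
      show "x < y"
      proof (rule ccontr)
        assume "\<not> x < y"
        then have "y = x \<or> y < x" by auto
        then show False using h smono \<open>0 \<le> x\<close> \<open>0 \<le> y\<close>
          unfolding strict_mono_on_def by fastforce
      qed
    next
      assume "x < y" then show "a x < a y"
        using smono \<open>0 \<le> x\<close> \<open>0 \<le> y\<close> unfolding strict_mono_on_def by auto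
    qed
  qed
  show ?thesis using m[of "\<bar>s\<bar>" "\<bar>t\<bar>"] by (simp add: a_abs)
qed

lemma a_pos: "t \<noteq> 0 \<Longrightarrow> a t > 0"
  using a_less_iff[of 0 t] a0 by simp

lemma contA_UNIV: "continuous_on UNIV a"
proof -
  have "continuous_on UNIV (\<lambda>t. a \<bar>t\<bar>)"
    by (rule continuous_on_compose2[OF contA continuous_on_rabs[OF continuous_on_id]]) auto
  then show ?thesis by (simp add: a_abs)
qed

lemma isCont_a: "isCont a t"
  using contA_UNIV by (simp add: continuous_on_eq_continuous_at)

lemma isCont_d1: "0 < t \<Longrightarrow> isCont (deriv a) t"
  using d2 DERIV_isCont by blast

lemma isCont_d2: "0 < t \<Longrightarrow> isCont (deriv (deriv a)) t"
  using c2 by (simp add: continuous_on_eq_continuous_at)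

end

definition Qd :: "(real \<Rightarrow> real) \<Rightarrow> real \<Rightarrow> real \<Rightarrow> real" where
  "Qd a \<tau> v = (if v = 0 then deriv a \<tau> else (a \<tau> - a (\<tau> - v\<^sup>2)) / v\<^sup>2)"

definition QQ :: "(real \<Rightarrow> real) \<Rightarrow> real \<Rightarrow> real \<Rightarrow> real" where
  "QQ a \<tau> v = (a \<tau> + a (\<tau> - v\<^sup>2)) * Qd a \<tau> v"

context SF begin

lemma Qd_cont_at0:
  assumes t0: "\<tau>0 > 0"
  shows "isCont (\<lambda>p. Qd a (fst p) (snd p)) (\<tau>0, 0)"
  unfolding continuous_at_eps_delta
proof (intro allI impI)
  fix e :: real assume e: "e > 0"
  obtain d1 where dd1: "d1 > 0" "\<And>y. dist y \<tau>0 < d1 \<Longrightarrow> dist (deriv a y) (deriv a \<tau>0) < e"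
    using isCont_d1[OF t0] e unfolding continuous_at_eps_delta by blast
  define d where "d = min 1 (min (d1/2) (\<tau>0/4))"
  have d: "d > 0" "d \<le> 1" "2 * d \<le> d1" "4 * d \<le> \<tau>0" using dd1 t0 by (auto simp: d_def)
  show "\<exists>d>0. \<forall>x'. dist x' (\<tau>0, 0) < d \<longrightarrow>
      dist (Qd a (fst x') (snd x')) (Qd a (fst (\<tau>0, 0::real)) (snd (\<tau>0, 0::real))) < e"
  proof (intro exI[of _ d] conjI allI impI)
    show "d > 0" by fact
    fix p :: "real \<times> real" assume p: "dist p (\<tau>0, 0) < d"
    obtain \<tau> v where pv: "p = (\<tau>, v)" by (cases p)
    have t: "\<bar>\<tau> - \<tau>0\<bar> < d" using dist_fst_le[of p "(\<tau>0,0)"] p by (simp add: pv dist_real_def)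
    have v: "\<bar>v\<bar> < d" using dist_snd_le[of p "(\<tau>0,0)"] p by (simp add: pv dist_real_def)
    have v2: "v\<^sup>2 < d"
    proof -
      have "v\<^sup>2 = \<bar>v\<bar> * \<bar>v\<bar>" by (simp add: power2_eq_square abs_mult[symmetric])
      also have "\<dots> \<le> \<bar>v\<bar> * 1" using v d by (intro mult_left_mono) auto
      finally show ?thesis using v by simp
    qed
    show "dist (Qd a (fst p) (snd p)) (Qd a (fst (\<tau>0, 0::real)) (snd (\<tau>0, 0::real))) < e"
    proof (cases "v = 0")
      case True
      then show ?thesis using dd1(2)[of \<tau>] t d by (simp add: pv Qd_def dist_real_def)
    next
      case False
      then have vp: "v\<^sup>2 > 0" by simp
      have "\<exists>z. \<tau> - v\<^sup>2 < z \<and> z < \<tau> \<and> a \<tau> - a (\<tau> - v\<^sup>2) = (\<tau> - (\<tau> - v\<^sup>2)) * deriv a z"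
        apply (rule MVT2)
        using vp apply simp
        apply (rule d1)
        using t v2 d by linarith
      then obtain z where z: "\<tau> - v\<^sup>2 < z" "z < \<tau>" "a \<tau> - a (\<tau> - v\<^sup>2) = v\<^sup>2 * deriv a z"
        by auto
      have "Qd a \<tau> v = deriv a z" using z(3) False by (simp add: Qd_def)
      moreover have "dist z \<tau>0 < d1" using z t v2 d unfolding dist_real_def by linarith
      ultimately show ?thesis using dd1(2)[of z] by (simp add: pv Qd_def)
    qed
  qed
qed

lemma Qd_cont: "continuous_on {p. fst p > 0} (\<lambda>p. Qd a (fst p) (snd p))"
proof (rule continuous_at_imp_continuous_on, clarify)
  fix \<tau>0 v0 :: real assume t0: "fst (\<tau>0, v0) > 0"
  show "isCont (\<lambda>p. Qd a (fst p) (snd p)) (\<tau>0, v0)"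
  proof (cases "v0 = 0")
    case True then show ?thesis using Qd_cont_at0 t0 by simp
  next
    case False
    have ev: "\<forall>\<^sub>F p in nhds (\<tau>0, v0). Qd a (fst p) (snd p) = (a (fst p) - a (fst p - (snd p)\<^sup>2)) / (snd p)\<^sup>2"
    proof -
      have "open {p :: real \<times> real. snd p \<noteq> 0}"
        by (rule open_Collect_neq) (auto intro: continuous_intros)
      then have "\<forall>\<^sub>F p in nhds (\<tau>0, v0). snd p \<noteq> 0"
        using eventually_nhds_in_open[OF \<open>open {p :: real \<times> real. snd p \<noteq> 0}\<close>, of "(\<tau>0,v0)"] False
        by simp
      then show ?thesis by eventually_elim (simp add: Qd_def)
    qed
    have ca: "\<And>f. isCont f (\<tau>0, v0) \<Longrightarrow> isCont (\<lambda>p. a (f p)) (\<tau>0, v0)"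
      by (rule continuous_at_compose[unfolded o_def, OF _ isCont_a])
    show ?thesis
      unfolding isCont_cong[OF ev]
      using False by (intro continuous_intros ca) auto
  qed
qed

lemma QQ_cont: "continuous_on {p. fst p > 0} (\<lambda>p. QQ a (fst p) (snd p))"
  unfolding QQ_def
  by (intro continuous_intros Qd_cont continuous_on_compose2[OF contA_UNIV]) auto

lemma QQ_pos:
  assumes "\<tau> > 0" "v\<^sup>2 < 2 * \<tau>"
  shows "QQ a \<tau> v > 0"
proof -
  have at: "a \<tau> > 0" using a_pos assms by simp
  have "a (\<tau> - v\<^sup>2) \<ge> 0" by (rule a_nonneg)
  moreover have "Qd a \<tau> v > 0"
  proof (cases "v = 0")
    case True then show ?thesis using pos1 assms by (simp add: Qd_def)
  next
    case False
    have "a (\<tau> - v\<^sup>2) < a \<tau>"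
      unfolding a_less_iff using assms False by (auto simp: abs_if)
    then show ?thesis using False by (simp add: Qd_def)
  qed
  ultimately show ?thesis using at by (simp add: QQ_def)
qed

lemma QQ_eq: assumes "v \<noteq> 0" shows "QQ a \<tau> v * v\<^sup>2 = (a \<tau>)\<^sup>2 - (a (\<tau> - v\<^sup>2))\<^sup>2"
proof -
  have "QQ a \<tau> v * v\<^sup>2 = (a \<tau> + a (\<tau> - v\<^sup>2)) * ((a \<tau> - a (\<tau> - v\<^sup>2)) / v\<^sup>2 * v\<^sup>2)"
    using assms by (simp add: QQ_def Qd_def)
  also have "\<dots> = (a \<tau> + a (\<tau> - v\<^sup>2)) * (a \<tau> - a (\<tau> - v\<^sup>2))" using assms by simp
  finally show ?thesis by (simp add: power2_eq_square algebra_simps)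
qed

end

definition psiR :: "(real \<Rightarrow> real) \<Rightarrow> real \<Rightarrow> real \<Rightarrow> real" where
  "psiR a \<tau> v = 2 * a (\<tau> - v\<^sup>2) / sqrt (QQ a \<tau> v)"

definition psiH :: "(real \<Rightarrow> real) \<Rightarrow> real \<Rightarrow> real \<Rightarrow> real" where
  "psiH a \<tau> v = (if v\<^sup>2 < \<tau> then deriv (deriv a) (\<tau> - v\<^sup>2) / (deriv a (\<tau> - v\<^sup>2))\<^sup>2 *
      (2 / sqrt (QQ a \<tau> v) - 2 * \<bar>v\<bar> / a \<tau>) else 0)"

context SF begin

lemma psiR_cont: "continuous_on {p. fst p > 0 \<and> (snd p)\<^sup>2 < 2 * fst p} (\<lambda>p. psiR a (fst p) (snd p))"
  unfolding psiR_def
proof (intro continuous_intros continuous_on_compose2[OF contA_UNIV])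
  show "continuous_on {p. 0 < fst p \<and> (snd p)\<^sup>2 < 2 * fst p} (\<lambda>x. QQ a (fst x) (snd x))"
    by (rule continuous_on_subset[OF QQ_cont]) auto
  show "\<forall>x\<in>{p. 0 < fst p \<and> (snd p)\<^sup>2 < 2 * fst p}. sqrt (QQ a (fst x) (snd x)) \<noteq> 0"
    using QQ_pos by force
qed auto

lemma psiH_bound:
  assumes "\<tau> > 0" "v \<noteq> 0" "v\<^sup>2 < \<tau>"
  defines "Pt \<equiv> sqrt ((a \<tau>)\<^sup>2 - (a (\<tau> - v\<^sup>2))\<^sup>2)"
  shows "\<bar>psiH a \<tau> v\<bar> \<le> 2 * K * \<bar>v\<bar> * a (\<tau> - v\<^sup>2) / (Pt * a \<tau> * (a \<tau> + Pt))"
proof -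
  define t where "t = \<tau> - v\<^sup>2"
  define c where "c = deriv (deriv a) t / (deriv a t)\<^sup>2"
  have tp: "t > 0" "t < \<tau>" using assms by (auto simp: t_def)
  have at: "a t > 0" using a_pos tp by simp
  have aT: "a \<tau> > 0" using a_pos assms by simp
  have atT: "a t < a \<tau>" using a_less_iff tp by simp
  have Q: "QQ a \<tau> v > 0" using QQ_pos assms by simp
  have QQe: "QQ a \<tau> v * v\<^sup>2 = (a \<tau>)\<^sup>2 - (a t)\<^sup>2" using QQ_eq assms by (simp add: t_def)
  have Pt: "Pt = sqrt (QQ a \<tau> v) * \<bar>v\<bar>"
    unfolding Pt_def t_def[symmetric] QQe[symmetric] by (simp add: real_sqrt_mult)
  have Ppos: "Pt > 0" using Pt Q assms by simp
  have P2: "Pt\<^sup>2 = (a \<tau>)\<^sup>2 - (a t)\<^sup>2" using Ppos atT at unfolding Pt_def t_def[symmetric]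
    by (simp add: power_strict_mono)
  have e1: "2 / sqrt (QQ a \<tau> v) - 2 * \<bar>v\<bar> / a \<tau> = 2 * \<bar>v\<bar> * (a \<tau> - Pt) / (Pt * a \<tau>)"
    using Pt Ppos aT Q assms by (simp add: field_simps)
  have e2: "a \<tau> - Pt = (a t)\<^sup>2 / (a \<tau> + Pt)"
    using P2 Ppos aT by (simp add: field_simps power2_eq_square)
  have ps: "psiH a \<tau> v = c * (2 * \<bar>v\<bar> * (a t)\<^sup>2 / (Pt * a \<tau> * (a \<tau> + Pt)))"
  proof -
    have "psiH a \<tau> v = c * (2 / sqrt (QQ a \<tau> v) - 2 * \<bar>v\<bar> / a \<tau>)"
      unfolding psiH_def using assms by (simp add: c_def t_def[symmetric])
    also have "\<dots> = c * (2 * \<bar>v\<bar> * ((a t)\<^sup>2 / (a \<tau> + Pt)) / (Pt * a \<tau>))"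
      unfolding e1 e2 ..
    finally show ?thesis by simp
  qed
  have cb: "\<bar>c\<bar> \<le> K / a t" using Kbd tp by (simp add: c_def)
  have "\<bar>psiH a \<tau> v\<bar> = \<bar>c\<bar> * (2 * \<bar>v\<bar> * (a t)\<^sup>2 / (Pt * a \<tau> * (a \<tau> + Pt)))"
    using ps Ppos aT by (simp add: abs_mult)
  also have "\<dots> \<le> K / a t * (2 * \<bar>v\<bar> * (a t)\<^sup>2 / (Pt * a \<tau> * (a \<tau> + Pt)))"
    using Ppos aT by (intro mult_right_mono cb) auto
  also have "\<dots> = 2 * K * \<bar>v\<bar> * a t / (Pt * a \<tau> * (a \<tau> + Pt))"
    using at by (simp add: field_simps power2_eq_square)
  finally show ?thesis by (simp add: t_def)
qed

lemma ev_nhds_at: "eventually P (nhds x) \<Longrightarrow> eventually P (at x within s)"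
  unfolding eventually_at_filter by (auto elim: eventually_mono)

lemma isCont_QQ: assumes "\<tau> > 0" shows "isCont (\<lambda>p. QQ a (fst p) (snd p)) (\<tau>, v)"
proof -
  have "open {p :: real \<times> real. fst p > 0}" by (intro open_Collect_less continuous_intros)
  from continuous_on_eq_continuous_at[OF this] QQ_cont
  have "\<forall>x\<in>{p. fst p > 0}. isCont (\<lambda>p. QQ a (fst p) (snd p)) x" by blast
  then show ?thesis using assms by auto
qed

lemma isCont_comp_t:
  fixes x :: "real \<times> real" and h :: "real \<Rightarrow> real"
  assumes "isCont h (fst x - (snd x)\<^sup>2)"
  shows "isCont (\<lambda>p. h (fst p - (snd p)\<^sup>2)) x"
  by (rule isCont_o2[where f="\<lambda>p. fst p - (snd p)\<^sup>2" and g=h, OF _ assms]) (intro isCont_diff isCont_fst isCont_snd isCont_power continuous_ident)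

lemma isCont_comp_fst:
  fixes x :: "real \<times> real" and h :: "real \<Rightarrow> real"
  assumes "isCont h (fst x)"
  shows "isCont (\<lambda>p. h (fst p)) x"
  by (rule isCont_o2[where f="\<lambda>p. fst p" and g=h, OF _ assms]) (intro isCont_diff isCont_fst isCont_snd isCont_power continuous_ident)

lemma psiH_cont: "continuous_on {p. fst p > 0} (\<lambda>p. psiH a (fst p) (snd p))"
proof (rule continuous_at_imp_continuous_on, clarify)
  fix \<tau>0 v0 :: real assume "fst (\<tau>0, v0) > 0"
  then have t0: "\<tau>0 > 0" by simp
  consider "v0\<^sup>2 < \<tau>0" | "v0\<^sup>2 > \<tau>0" | "v0\<^sup>2 = \<tau>0" by linarith
  then show "isCont (\<lambda>p. psiH a (fst p) (snd p)) (\<tau>0, v0)"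
  proof cases
    case 1
    define g where "g p = deriv (deriv a) (fst p - (snd p)\<^sup>2) / (deriv a (fst p - (snd p)\<^sup>2))\<^sup>2 *
      (2 / sqrt (QQ a (fst p) (snd p)) - 2 * \<bar>snd p\<bar> / a (fst p))" for p :: "real \<times> real"
    have op: "open {p :: real \<times> real. (snd p)\<^sup>2 < fst p}"
      by (intro open_Collect_less continuous_intros)
    have ev: "\<forall>\<^sub>F p in nhds (\<tau>0, v0). psiH a (fst p) (snd p) = g p"
    proof -
      have "\<forall>\<^sub>F p in nhds (\<tau>0, v0). (snd p)\<^sup>2 < fst p"
        using eventually_nhds_in_open[OF op, of "(\<tau>0,v0)"] 1 by simp
      then show ?thesis by eventually_elim (simp add: psiH_def g_def)
    qed
    have tp: "\<tau>0 - v0\<^sup>2 > 0" using 1 by simp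
    have "isCont g (\<tau>0, v0)"
      unfolding g_def
      apply (intro continuous_intros isCont_comp_t isCont_comp_fst isCont_d1 isCont_d2 isCont_a isCont_QQ)
      using tp t0 QQ_pos[of \<tau>0 v0] pos1[of "\<tau>0 - v0\<^sup>2"] a_pos[of \<tau>0] 1 by auto
    then show ?thesis using isCont_cong[OF ev] by simp
  next
    case 2
    have op: "open {p :: real \<times> real. fst p < (snd p)\<^sup>2}"
      by (intro open_Collect_less continuous_intros)
    have ev: "\<forall>\<^sub>F p in nhds (\<tau>0, v0). psiH a (fst p) (snd p) = 0"
    proof -
      have "\<forall>\<^sub>F p in nhds (\<tau>0, v0). fst p < (snd p)\<^sup>2"
        using eventually_nhds_in_open[OF op, of "(\<tau>0,v0)"] 2 by simp
      then show ?thesis by eventually_elim (simp add: psiH_def)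
    qed
    then show ?thesis using isCont_cong[OF ev] by simp
  next
    case 3
    have v0: "v0 \<noteq> 0" using 3 t0 by auto
    define Pt where "Pt p = sqrt ((a (fst p))\<^sup>2 - (a (fst p - (snd p)\<^sup>2))\<^sup>2)" for p :: "real \<times> real"
    define B where "B p = 2 * K * \<bar>snd p\<bar> * a (fst p - (snd p)\<^sup>2) / (Pt p * a (fst p) * (a (fst p) + Pt p))"
      for p :: "real \<times> real"
    have aT: "a \<tau>0 > 0" using a_pos t0 by simp
    have Pt0: "Pt (\<tau>0, v0) = a \<tau>0" using 3 aT by (simp add: Pt_def a0)
    have "isCont B (\<tau>0, v0)"
      unfolding B_def Pt_def
      apply (intro continuous_intros isCont_comp_t isCont_comp_fst isCont_a)
      using Pt0 aT unfolding Pt_def by auto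
    moreover have "B (\<tau>0, v0) = 0" using 3 by (simp add: B_def a0)
    ultimately have Bt: "(B \<longlongrightarrow> 0) (at (\<tau>0, v0))"
      using isCont_def by metis
    have op: "open {p :: real \<times> real. 0 < fst p \<and> snd p \<noteq> 0}"
      by (intro open_Collect_conj open_Collect_less open_Collect_neq continuous_intros)
    have ev: "\<forall>\<^sub>F p in at (\<tau>0, v0). norm (psiH a (fst p) (snd p)) \<le> \<bar>B p\<bar>"
    proof -
      have "\<forall>\<^sub>F p in nhds (\<tau>0, v0). 0 < fst p \<and> snd p \<noteq> 0"
        using eventually_nhds_in_open[OF op, of "(\<tau>0,v0)"] t0 v0 by simp
      then have "\<forall>\<^sub>F p in at (\<tau>0, v0). 0 < fst p \<and> snd p \<noteq> 0" by (rule ev_nhds_at)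
      then show ?thesis
      proof eventually_elim
        case (elim p)
        show ?case
        proof (cases "(snd p)\<^sup>2 < fst p")
          case True
          then have "\<bar>psiH a (fst p) (snd p)\<bar> \<le> B p"
            using psiH_bound[of "fst p" "snd p"] elim by (simp add: B_def Pt_def)
          then show ?thesis by simp
        qed (simp add: psiH_def)
      qed
    qed
    have "((\<lambda>p. psiH a (fst p) (snd p)) \<longlongrightarrow> 0) (at (\<tau>0, v0))"
      by (rule Lim_null_comparison[OF ev]) (use tendsto_rabs[OF Bt] in simp)
    moreover have "psiH a \<tau>0 v0 = 0" using 3 by (simp add: psiH_def)
    ultimately show ?thesis unfolding isCont_def by simp
  qed
qed

end

lemma subst_sqrt:
  fixes \<phi> \<psi> :: "real \<Rightarrow> real"
  assumes st: "s < \<tau>" and cont: "continuous_on {0..sqrt (\<tau> - s)} \<psi>"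
    and eq: "\<And>v. 0 < v \<Longrightarrow> v < sqrt (\<tau> - s) \<Longrightarrow> \<psi> v = 2 * v * \<phi> (\<tau> - v\<^sup>2)"
  shows "(\<phi> has_integral integral {0..sqrt (\<tau> - s)} \<psi>) {s..\<tau>}"
proof -
  define w where "w = sqrt (\<tau> - s)"
  define \<Psi> where "\<Psi> y = integral {0..y} \<psi>" for y
  define \<Phi> where "\<Phi> x = - \<Psi> (sqrt (\<tau> - x))" for x
  have w: "w > 0" using st by (simp add: w_def)
  have int: "\<psi> integrable_on {0..w}" using cont by (simp add: w_def integrable_continuous_real)
  have cP: "continuous_on {0..w} \<Psi>" unfolding \<Psi>_def by (rule indefinite_integral_continuous_1[OF int])
  have "(\<Phi>' has_integral (\<Phi> \<tau> - \<Phi> s)) {s..\<tau>}" if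
       "continuous_on {s..\<tau>} \<Phi>" "\<And>x. x \<in> {s<..<\<tau>} \<Longrightarrow> (\<Phi> has_vector_derivative \<Phi>' x) (at x)" for \<Phi>'
    using fundamental_theorem_of_calculus_interior[of s \<tau> \<Phi> \<Phi>'] st that by simp
  moreover have "continuous_on {s..\<tau>} \<Phi>"
    unfolding \<Phi>_def
    by (intro continuous_intros continuous_on_compose2[OF cP]) (auto simp: w_def)
  moreover have "(\<Phi> has_vector_derivative \<phi> x) (at x)" if x: "x \<in> {s<..<\<tau>}" for x
  proof -
    define y where "y = sqrt (\<tau> - x)"
    have y: "0 < y" "y < w" using x by (auto simp: y_def w_def)
    have yy: "y\<^sup>2 = \<tau> - x" using x by (simp add: y_def)
    have d\<Psi>: "(\<Psi> has_real_derivative \<psi> y) (at y)"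
    proof -
      have "(\<Psi> has_real_derivative \<psi> y) (at y within {0..w})"
        unfolding \<Psi>_def using integral_has_real_derivative[OF cont[folded w_def], of y] y by simp
      moreover have "at y within {0..w} = at y"
        using y by (intro at_within_interior) simp
      ultimately show ?thesis by simp
    qed
    have dsq: "((\<lambda>x. sqrt (\<tau> - x)) has_real_derivative (inverse (sqrt (\<tau> - x)) / 2 * (-1))) (at x)"
    proof -
      have "DERIV (\<lambda>x. \<tau> - x) x :> -1" by (auto intro!: derivative_eq_intros)
      from DERIV_chain2[OF DERIV_real_sqrt this] show ?thesis using x by simp
    qed
    have "((\<lambda>x. \<Psi> (sqrt (\<tau> - x))) has_real_derivative \<psi> y * (inverse (sqrt (\<tau> - x)) / 2 * (-1))) (at x)"
      using DERIV_chain2[OF d\<Psi>[unfolded y_def] dsq] by (simp add: y_def)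
    then have "(\<Phi> has_real_derivative \<psi> y / (2 * y)) (at x)"
      unfolding \<Phi>_def y_def[symmetric] by (auto dest: DERIV_minus simp: field_simps)
    moreover have "\<psi> y / (2 * y) = \<phi> x" using eq[of y] y yy by (simp add: w_def)
    ultimately show ?thesis by (simp add: has_real_derivative_iff_has_vector_derivative)
  qed
  ultimately have "(\<phi> has_integral (\<Phi> \<tau> - \<Phi> s)) {s..\<tau>}" by blast
  moreover have "\<Phi> \<tau> - \<Phi> s = integral {0..w} \<psi>" by (simp add: \<Phi>_def \<Psi>_def w_def)
  ultimately show ?thesis by (simp add: w_def)
qed

lemma rescale01:
  fixes \<psi> :: "real \<Rightarrow> real"
  assumes w: "w \<ge> 0" and cont: "continuous_on {0..w} \<psi>"
  shows "integral {0..w} \<psi> = integral {0..1} (\<lambda>u. w * \<psi> (w * u))"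
proof (cases "w = 0")
  case True then show ?thesis by simp
next
  case False
  then have wp: "w > 0" using w by simp
  have "(\<psi> has_integral integral {0..w} \<psi>) {0..w}"
    using integrable_integral[OF integrable_continuous_real[OF cont]] .
  from has_integral_stretch_real[OF this, of w] wp
  have "((\<lambda>x. \<psi> (w * x)) has_integral (1 / w) * integral {0..w} \<psi>) ((\<lambda>x. x / w) ` {0..w})" by simp
  moreover have "(\<lambda>x. x / w) ` {0..w} = {0..1}"
  proof
    show "(\<lambda>x. x / w) ` {0..w} \<subseteq> {0..1}" using wp by auto
    show "{0..1} \<subseteq> (\<lambda>x. x / w) ` {0..w}"
    proof
      fix u :: real assume "u \<in> {0..1}"
      then have "w * u \<in> {0..w}" "u = (w * u) / w" using wp by (auto simp: mult_le_cancel_left1)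
      then show "u \<in> (\<lambda>x. x / w) ` {0..w}" by blast
    qed
  qed
  ultimately have "((\<lambda>x. \<psi> (w * x)) has_integral (1 / w) * integral {0..w} \<psi>) {0..1}" by simp
  from has_integral_mult_right[OF this, of w]
  have "((\<lambda>x. w * \<psi> (w * x)) has_integral integral {0..w} \<psi>) {0..1}" using wp by simp
  then show ?thesis by (rule integral_unique[symmetric])
qed

lemma subst01:
  fixes \<phi> \<psi> :: "real \<Rightarrow> real"
  assumes st: "s < \<tau>" and cont: "continuous_on {0..sqrt (\<tau> - s)} \<psi>"
    and eq: "\<And>v. 0 < v \<Longrightarrow> v < sqrt (\<tau> - s) \<Longrightarrow> \<psi> v = 2 * v * \<phi> (\<tau> - v\<^sup>2)"
  shows "(\<phi> has_integral integral {0..1} (\<lambda>u. sqrt (\<tau> - s) * \<psi> (sqrt (\<tau> - s) * u))) {s..\<tau>}"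
  using subst_sqrt[OF assms] rescale01[OF _ cont] st by simp


definition RR :: "(real \<Rightarrow> real) \<Rightarrow> real \<Rightarrow> real \<Rightarrow> real" where
  "RR a \<tau> s = integral {0..1} (\<lambda>u. sqrt (\<tau> - s) * psiR a \<tau> (sqrt (\<tau> - s) * u))"

definition HH :: "(real \<Rightarrow> real) \<Rightarrow> real \<Rightarrow> real \<Rightarrow> real" where
  "HH a \<tau> s = integral {0..1} (\<lambda>u. sqrt (\<tau> - s) * psiH a \<tau> (sqrt (\<tau> - s) * u))"

definition eta :: "(real \<Rightarrow> real) \<Rightarrow> real \<Rightarrow> real \<Rightarrow> real" where
  "eta a \<tau> t = deriv (deriv a) t / (deriv a t)\<^sup>2 * (1 / sqrt ((a \<tau>)\<^sup>2 - (a t)\<^sup>2) - 1 / a \<tau>)"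

lemma deriv_lower:
  fixes \<phi> G :: "real \<Rightarrow> real"
  assumes "lo < s" "s < c" "c < \<tau>" "continuous_on {lo..c} \<phi>"
    and G: "\<And>x. lo < x \<Longrightarrow> x < c \<Longrightarrow> (\<phi> has_integral G x) {x..\<tau>}"
  shows "DERIV G s :> - \<phi> s"
proof -
  define C where "C = integral {c..\<tau>} \<phi>"
  have eq: "G x = integral {x..c} \<phi> + C" if "x \<in> {lo<..<c}" for x
  proof -
    have i: "\<phi> integrable_on {x..\<tau>}" using G[of x] that by auto
    have "G x = integral {x..\<tau>} \<phi>" using G[of x] that by (auto intro: integral_unique[symmetric])
    also have "\<dots> = integral {x..c} \<phi> + integral {c..\<tau>} \<phi>"
      using Henstock_Kurzweil_Integration.integral_combine[OF _ _ i, of c] that assms by auto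
    finally show ?thesis by (simp add: C_def)
  qed
  have "((\<lambda>x. integral {x..c} \<phi>) has_real_derivative - \<phi> s) (at s within {lo..c})"
    using integral_has_real_derivative'[OF assms(4), of s] assms by auto
  moreover have "at s within {lo..c} = at s" using assms by (intro at_within_interior) auto
  ultimately have "((\<lambda>x. integral {x..c} \<phi> + C) has_real_derivative - \<phi> s) (at s)"
    by (auto intro!: derivative_eq_intros)
  then show ?thesis
    by (rule has_field_derivative_transform_within_open[of _ _ _ "{lo<..<c}"]) (use assms eq in auto)
qed

context SF begin

lemma R_has_int:
  assumes "\<tau> > 0" "- \<tau> < s" "s < \<tau>"
  shows "((\<lambda>t. a t / sqrt ((a \<tau>)\<^sup>2 - (a t)\<^sup>2)) has_integral RR a \<tau> s) {s..\<tau>}"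
  unfolding RR_def
proof (rule subst01)
  show "s < \<tau>" by fact
  show "continuous_on {0..sqrt (\<tau> - s)} (psiR a \<tau>)"
  proof (rule continuous_on_compose2[OF psiR_cont, of _ "\<lambda>v. (\<tau>, v)", simplified])
    show "continuous_on {0..sqrt (\<tau> - s)} (Pair \<tau>)" by (intro continuous_intros)
    show "Pair \<tau> ` {0..sqrt (\<tau> - s)} \<subseteq> {p. 0 < fst p \<and> (snd p)\<^sup>2 < 2 * fst p}"
    proof clarify
      fix v assume v: "v \<in> {0..sqrt (\<tau> - s)}"
      then have "v\<^sup>2 \<le> (sqrt (\<tau> - s))\<^sup>2" by (intro power_mono) auto
      then show "0 < fst (\<tau>, v) \<and> (snd (\<tau>, v))\<^sup>2 < 2 * fst (\<tau>, v)" using assms by simp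
    qed
  qed
  fix v assume v: "0 < v" "v < sqrt (\<tau> - s)"
  then have "v\<^sup>2 < (sqrt (\<tau> - s))\<^sup>2" by (intro power_strict_mono) auto
  then have v2: "v\<^sup>2 < 2 * \<tau>" using assms by simp
  have Q: "QQ a \<tau> v > 0" using QQ_pos[OF assms(1) v2] .
  have e: "(a \<tau>)\<^sup>2 - (a (\<tau> - v\<^sup>2))\<^sup>2 = QQ a \<tau> v * v\<^sup>2"
    by (rule QQ_eq[symmetric]) (use v in simp)
  have "sqrt ((a \<tau>)\<^sup>2 - (a (\<tau> - v\<^sup>2))\<^sup>2) = sqrt (QQ a \<tau> v) * v"
    unfolding e using v by (simp add: real_sqrt_mult)
  then show "psiR a \<tau> v = 2 * v * (a (\<tau> - v\<^sup>2) / sqrt ((a \<tau>)\<^sup>2 - (a (\<tau> - v\<^sup>2))\<^sup>2))"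
    using v Q by (simp add: psiR_def)
qed

lemma H_has_int:
  assumes "\<tau> > 0" "0 \<le> s" "s < \<tau>"
  shows "(eta a \<tau> has_integral HH a \<tau> s) {s..\<tau>}"
  unfolding HH_def
proof (rule subst01)
  show "s < \<tau>" by fact
  show "continuous_on {0..sqrt (\<tau> - s)} (psiH a \<tau>)"
    by (rule continuous_on_compose2[OF psiH_cont, of _ "\<lambda>v. (\<tau>, v)", simplified])
       (use assms in \<open>auto intro!: continuous_intros\<close>)
  fix v assume v: "0 < v" "v < sqrt (\<tau> - s)"
  then have "v\<^sup>2 < (sqrt (\<tau> - s))\<^sup>2" by (intro power_strict_mono) auto
  then have v2: "v\<^sup>2 < \<tau>" using assms by simp
  have Q: "QQ a \<tau> v > 0" using v2 assms by (intro QQ_pos) auto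
  have e: "(a \<tau>)\<^sup>2 - (a (\<tau> - v\<^sup>2))\<^sup>2 = QQ a \<tau> v * v\<^sup>2"
    by (rule QQ_eq[symmetric]) (use v in simp)
  have "sqrt ((a \<tau>)\<^sup>2 - (a (\<tau> - v\<^sup>2))\<^sup>2) = sqrt (QQ a \<tau> v) * v"
    unfolding e using v by (simp add: real_sqrt_mult)
  then show "psiH a \<tau> v = 2 * v * eta a \<tau> (\<tau> - v\<^sup>2)"
  proof -
    have "a \<tau> > 0" using a_pos assms by simp
    moreover have "deriv a (\<tau> - v\<^sup>2) > 0" using pos1 v2 by simp
    ultimately show ?thesis using \<open>sqrt _ = _\<close> v Q v2
      by (simp add: psiH_def eta_def field_simps)
  qed
qed

lemma cont_param01:
  fixes \<psi> :: "real \<Rightarrow> real \<Rightarrow> real" and S U :: "(real \<times> real) set"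
  assumes c: "continuous_on U (\<lambda>p. \<psi> (fst p) (snd p))"
    and sub: "\<And>\<tau> s u. (\<tau>, s) \<in> S \<Longrightarrow> 0 \<le> u \<Longrightarrow> u \<le> 1 \<Longrightarrow> (\<tau>, sqrt (\<tau> - s) * u) \<in> U"
  shows "continuous_on S (\<lambda>p. integral {0..1} (\<lambda>u. sqrt (fst p - snd p) * \<psi> (fst p) (sqrt (fst p - snd p) * u)))"
proof -
  define g where "g z = (fst (fst z), sqrt (fst (fst z) - snd (fst z)) * snd z)" for z :: "(real \<times> real) \<times> real"
  have gc: "continuous_on (S \<times> cbox 0 1) g" unfolding g_def by (intro continuous_intros)
  have gs: "g ` (S \<times> cbox 0 1) \<subseteq> U"
    unfolding g_def using sub by (auto simp: cbox_interval)
  have c1: "continuous_on (S \<times> cbox 0 1) (\<lambda>z. \<psi> (fst (g z)) (snd (g z)))"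
    using continuous_on_compose2[OF c gc gs] by simp
  have c2: "continuous_on (S \<times> cbox 0 1) (\<lambda>z. sqrt (fst (fst z) - snd (fst z)) * \<psi> (fst (g z)) (snd (g z)))"
    by (intro continuous_intros c1)
  have c3: "continuous_on (S \<times> cbox 0 1)
      (\<lambda>(x, t). sqrt (fst x - snd x) * \<psi> (fst x) (sqrt (fst x - snd x) * t))"
    using c2 by (simp add: g_def case_prod_beta)
  from integral_continuous_on_param[OF c3] show ?thesis by (simp add: cbox_interval)
qed

lemma RR_cont: "continuous_on {p. fst p > 0 \<and> - fst p < snd p \<and> snd p \<le> fst p} (\<lambda>p. RR a (fst p) (snd p))"
  unfolding RR_def
proof (rule cont_param01[OF psiR_cont])
  fix \<tau> s u :: real assume h: "(\<tau>, s) \<in> {p. 0 < fst p \<and> - fst p < snd p \<and> snd p \<le> fst p}" "0 \<le> u" "u \<le> 1"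
  have "(sqrt (\<tau> - s) * u)\<^sup>2 = (\<tau> - s) * u\<^sup>2" using h by (simp add: power_mult_distrib)
  also have "\<dots> \<le> (\<tau> - s) * 1" using h by (intro mult_left_mono) (auto simp: power_le_one)
  finally show "(\<tau>, sqrt (\<tau> - s) * u) \<in> {p. 0 < fst p \<and> (snd p)\<^sup>2 < 2 * fst p}" using h by simp
qed

lemma HH_cont: "continuous_on {p. fst p > 0 \<and> snd p \<le> fst p} (\<lambda>p. HH a (fst p) (snd p))"
  unfolding HH_def by (rule cont_param01[OF psiH_cont]) auto

end

definition PP :: "(real \<Rightarrow> real) \<Rightarrow> real \<Rightarrow> real \<Rightarrow> real" where
  "PP a \<tau> s = sqrt ((a \<tau>)\<^sup>2 - (a s)\<^sup>2)"

definition ee :: "(real \<Rightarrow> real) \<Rightarrow> real \<Rightarrow> real" where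
  "ee a s = (if s > 0 then (a s)\<^sup>2 / deriv a s else 0)"

definition ad0 :: "(real \<Rightarrow> real) \<Rightarrow> real \<Rightarrow> real \<Rightarrow> real" where
  "ad0 a L s = (if s > 0 then deriv a s else L)"

definition Ft :: "(real \<Rightarrow> real) \<Rightarrow> real \<Rightarrow> real \<Rightarrow> real" where
  "Ft a \<tau> s = PP a \<tau> s * HH a \<tau> s - ee a s / (a \<tau> * (PP a \<tau> s + a \<tau>)) - (PP a \<tau> s / a \<tau> - 1) / deriv a \<tau>"

definition Gt :: "(real \<Rightarrow> real) \<Rightarrow> real \<Rightarrow> real \<Rightarrow> real \<Rightarrow> real" where
  "Gt a L \<tau> s = (1 - ad0 a L s / deriv a \<tau>) / a \<tau> + ad0 a L s * HH a \<tau> s"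

context SF begin

lemma inv_d1_int:
  assumes "0 < s" "s < \<tau>"
  shows "((\<lambda>t. deriv (deriv a) t / (deriv a t)\<^sup>2) has_integral (1 / deriv a s - 1 / deriv a \<tau>)) {s..\<tau>}"
proof -
  have "((\<lambda>t. deriv (deriv a) t / (deriv a t)\<^sup>2) has_integral ((- inverse (deriv a \<tau>)) - (- inverse (deriv a s)))) {s..\<tau>}"
  proof (rule fundamental_theorem_of_calculus_interior)
    show "s \<le> \<tau>" using assms by simp
    show "continuous_on {s..\<tau>} (\<lambda>t. - inverse (deriv a t))"
      proof -
      have h: "\<forall>x\<in>{s..\<tau>}. isCont (deriv a) x \<and> deriv a x \<noteq> 0"
        using assms pos1 isCont_d1 by (metis atLeastAtMost_iff less_le_trans order_less_irrefl)
      show ?thesis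
        by (intro continuous_intros continuous_at_imp_continuous_on) (use h in auto)
    qed
    fix x assume x: "x \<in> {s<..<\<tau>}"
    then have xp: "x > 0" using assms by simp
    have "DERIV (\<lambda>t. inverse (deriv a t)) x :> - (deriv (deriv a) x * inverse (deriv a x ^ Suc (Suc 0)))"
      by (rule DERIV_inverse_fun[OF d2[OF xp]]) (use pos1[OF xp] in simp)
    from DERIV_minus[OF this]
    show "((\<lambda>t. - inverse (deriv a t)) has_vector_derivative deriv (deriv a) x / (deriv a x)\<^sup>2) (at x)"
      by (simp add: has_real_derivative_iff_has_vector_derivative divide_inverse power2_eq_square)
  qed
  then show ?thesis by (simp add: divide_inverse)
qed

lemma PP0: "\<tau> > 0 \<Longrightarrow> PP a \<tau> 0 = a \<tau>"
  using a_pos[of \<tau>] by (simp add: PP_def a0)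

lemma fpos_integrand:
  assumes "\<tau> > 0"
  shows "(\<lambda>t. deriv (deriv a) t / (deriv a t)\<^sup>2 * (sqrt ((a \<tau>)\<^sup>2 - (a s)\<^sup>2) / sqrt ((a \<tau>)\<^sup>2 - (a t)\<^sup>2) - 1))
    = (\<lambda>t. PP a \<tau> s * eta a \<tau> t + (PP a \<tau> s / a \<tau> - 1) * (deriv (deriv a) t / (deriv a t)\<^sup>2))"
proof
  fix t
  show "deriv (deriv a) t / (deriv a t)\<^sup>2 * (sqrt ((a \<tau>)\<^sup>2 - (a s)\<^sup>2) / sqrt ((a \<tau>)\<^sup>2 - (a t)\<^sup>2) - 1)
    = PP a \<tau> s * eta a \<tau> t + (PP a \<tau> s / a \<tau> - 1) * (deriv (deriv a) t / (deriv a t)\<^sup>2)"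
    by (simp add: PP_def eta_def divide_inverse algebra_simps)
qed

lemma fpos_eq:
  assumes "\<tau> > 0" "0 \<le> s" "s < \<tau>"
  shows "fpos a \<tau> s = Ft a \<tau> s"
proof -
  have aT: "a \<tau> > 0" using a_pos assms by simp
  have H: "(eta a \<tau> has_integral HH a \<tau> s) {s..\<tau>}" using H_has_int assms by simp
  show ?thesis
  proof (cases "s = 0")
    case True
    have "fpos a \<tau> s = integral {s..\<tau>} (\<lambda>t. a \<tau> * eta a \<tau> t)"
      unfolding fpos_def fpos_integrand[OF assms(1)] using True aT by (simp add: PP0 assms)
    also have "\<dots> = a \<tau> * HH a \<tau> s" using has_integral_mult_right[OF H, of "a \<tau>"] by (rule integral_unique)
    finally show ?thesis using True aT by (simp add: Ft_def PP0 assms ee_def)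
  next
    case False
    then have sp: "s > 0" using assms by simp
    have "((\<lambda>t. PP a \<tau> s * eta a \<tau> t + (PP a \<tau> s / a \<tau> - 1) * (deriv (deriv a) t / (deriv a t)\<^sup>2))
        has_integral (PP a \<tau> s * HH a \<tau> s + (PP a \<tau> s / a \<tau> - 1) * (1 / deriv a s - 1 / deriv a \<tau>))) {s..\<tau>}"
      by (intro has_integral_add has_integral_mult_right H inv_d1_int sp assms)
    then have "fpos a \<tau> s = PP a \<tau> s * HH a \<tau> s + (PP a \<tau> s / a \<tau> - 1) * (1 / deriv a s - 1 / deriv a \<tau>)"
      unfolding fpos_def fpos_integrand[OF assms(1)] by (rule integral_unique)
    also have "\<dots> = Ft a \<tau> s"
    proof -
      have as: "a s < a \<tau>" using a_less_iff assms by simp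
      have "(a s)\<^sup>2 \<le> (a \<tau>)\<^sup>2" using as a_nonneg[of s] by (intro power_mono) auto
      then have h0: "0 \<le> (a \<tau>)\<^sup>2 - (a s)\<^sup>2" by linarith
      have P2: "(PP a \<tau> s)\<^sup>2 = (a \<tau>)\<^sup>2 - (a s)\<^sup>2"
        unfolding PP_def using h0 by (rule real_sqrt_pow2)
      have Pn: "PP a \<tau> s \<ge> 0" unfolding PP_def using h0 by (rule real_sqrt_ge_zero)
      have d: "deriv a s > 0" "deriv a \<tau> > 0" using pos1 sp assms by auto
      have "PP a \<tau> s / a \<tau> - 1 = - (a s)\<^sup>2 / (a \<tau> * (PP a \<tau> s + a \<tau>))"
      proof -
        have e: "(PP a \<tau> s - a \<tau>) * (PP a \<tau> s + a \<tau>) = - (a s)\<^sup>2"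
          using P2 by (simp add: algebra_simps power2_eq_square)
        have p: "PP a \<tau> s + a \<tau> > 0" using Pn aT by simp
        have "PP a \<tau> s / a \<tau> - 1 = (PP a \<tau> s - a \<tau>) / a \<tau>"
          using aT by (simp add: diff_divide_distrib)
        also have "\<dots> = ((PP a \<tau> s - a \<tau>) * (PP a \<tau> s + a \<tau>)) / (a \<tau> * (PP a \<tau> s + a \<tau>))"
          using p by simp
        finally have "PP a \<tau> s / a \<tau> - 1 = ((PP a \<tau> s - a \<tau>) * (PP a \<tau> s + a \<tau>)) / (a \<tau> * (PP a \<tau> s + a \<tau>))" .
        then show ?thesis unfolding e by simp
      qed
      then have "(PP a \<tau> s / a \<tau> - 1) * (1 / deriv a s) = - ee a s / (a \<tau> * (PP a \<tau> s + a \<tau>))"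
        using sp by (simp add: ee_def)
      moreover have "(PP a \<tau> s / a \<tau> - 1) * (1 / deriv a s - 1 / deriv a \<tau>) =
          (PP a \<tau> s / a \<tau> - 1) * (1 / deriv a s) - (PP a \<tau> s / a \<tau> - 1) / deriv a \<tau>"
        by (simp add: right_diff_distrib)
      ultimately show ?thesis unfolding Ft_def by linarith
    qed
    finally show ?thesis .
  qed
qed

lemma PP_pos: "\<bar>s\<bar> < \<tau> \<Longrightarrow> PP a \<tau> s > 0"
proof -
  assume h: "\<bar>s\<bar> < \<tau>"
  then have "a s < a \<tau>" using a_less_iff by simp
  then have "(a s)\<^sup>2 < (a \<tau>)\<^sup>2" using a_nonneg[of s] by (intro power_strict_mono) auto
  then show ?thesis by (simp add: PP_def)
qed

lemma PP_deriv:
  assumes "0 < s" "s < \<tau>"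
  shows "DERIV (\<lambda>x. PP a \<tau> x) s :> - (a s * deriv a s / PP a \<tau> s)"
proof -
  have pos: "(a \<tau>)\<^sup>2 - (a s)\<^sup>2 > 0" using PP_pos[of s \<tau>] assms by (simp add: PP_def)
  have "DERIV (\<lambda>x. (a \<tau>)\<^sup>2 - (a x)\<^sup>2) s :> 0 - of_nat 2 * (deriv a s * a s ^ (2 - Suc 0))"
    by (intro DERIV_diff DERIV_const DERIV_power d1) (use assms in simp)
  from DERIV_chain2[OF DERIV_real_sqrt[OF pos] this]
  show ?thesis using pos by (simp add: PP_def field_simps)
qed

lemma eta_cont:
  assumes "0 < lo" "c < \<tau>"
  shows "continuous_on {lo..c} (eta a \<tau>)"
proof -
  have h: "\<forall>x\<in>{lo..c}. isCont (deriv (deriv a)) x \<and> isCont (deriv a) x \<and> deriv a x \<noteq> 0 \<and>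
      sqrt ((a \<tau>)\<^sup>2 - (a x)\<^sup>2) \<noteq> 0 \<and> a \<tau> \<noteq> 0"
  proof
    fix x assume x: "x \<in> {lo..c}"
    then have "0 < x" "\<bar>x\<bar> < \<tau>" using assms by auto
    then show "isCont (deriv (deriv a)) x \<and> isCont (deriv a) x \<and> deriv a x \<noteq> 0 \<and>
      sqrt ((a \<tau>)\<^sup>2 - (a x)\<^sup>2) \<noteq> 0 \<and> a \<tau> \<noteq> 0"
      using isCont_d1[of x] isCont_d2[of x] pos1[of x] PP_pos[of x \<tau>] a_pos[of \<tau>] by (auto simp: PP_def)
  qed
  show ?thesis unfolding eta_def
    by (intro continuous_intros continuous_at_imp_continuous_on ballI) (use h isCont_a in auto)
qed

lemma H_deriv:
  assumes "0 < s" "s < \<tau>"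
  shows "DERIV (\<lambda>x. HH a \<tau> x) s :> - eta a \<tau> s"
  by (rule deriv_lower[of "s/2" s "(s+\<tau>)/2" \<tau>]) (use assms in \<open>auto intro!: eta_cont H_has_int\<close>)

lemma R_deriv:
  assumes "\<tau> > 0" "- \<tau> < s" "s < \<tau>"
  shows "DERIV (\<lambda>x. RR a \<tau> x) s :> - (a s / PP a \<tau> s)"
proof (rule deriv_lower[of "(s - \<tau>)/2" s "(s+\<tau>)/2" \<tau>])
  show "continuous_on {(s - \<tau>) / 2..(s + \<tau>) / 2} (\<lambda>s. a s / PP a \<tau> s)"
  proof (intro continuous_intros continuous_at_imp_continuous_on ballI isCont_a)
    fix x assume "x \<in> {(s - \<tau>) / 2..(s + \<tau>) / 2}"
    then have "\<bar>x\<bar> < \<tau>" using assms by auto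
    then have "PP a \<tau> x > 0" by (rule PP_pos)
    then show "isCont (PP a \<tau>) x" "PP a \<tau> x \<noteq> 0"
      unfolding PP_def by (auto intro!: continuous_intros isCont_a)
  qed
qed (use assms R_has_int in \<open>auto simp: PP_def\<close>)

lemma fpos_eq2:
  assumes "0 < s" "s < \<tau>"
  shows "fpos a \<tau> s = PP a \<tau> s * HH a \<tau> s + (PP a \<tau> s / a \<tau> - 1) * (1 / deriv a s - 1 / deriv a \<tau>)"
proof -
  have H: "(eta a \<tau> has_integral HH a \<tau> s) {s..\<tau>}" using H_has_int assms by simp
  have "((\<lambda>t. PP a \<tau> s * eta a \<tau> t + (PP a \<tau> s / a \<tau> - 1) * (deriv (deriv a) t / (deriv a t)\<^sup>2))
      has_integral (PP a \<tau> s * HH a \<tau> s + (PP a \<tau> s / a \<tau> - 1) * (1 / deriv a s - 1 / deriv a \<tau>))) {s..\<tau>}"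
    by (intro has_integral_add has_integral_mult_right H inv_d1_int assms)
  moreover have tp: "\<tau> > 0" using assms by simp
  ultimately show ?thesis
    unfolding fpos_def fpos_integrand[OF tp] by (simp add: integral_unique)
qed

lemma F_deriv:
  assumes sp: "0 < s" "s < \<tau>"
  shows "DERIV (\<lambda>x. fpos a \<tau> x) s :>
    - (a s * deriv a s / PP a \<tau> s) * (HH a \<tau> s + (1 / deriv a s - 1 / deriv a \<tau>) / a \<tau>)"
proof -
  define Fm where "Fm x = PP a \<tau> x * HH a \<tau> x + (PP a \<tau> x / a \<tau> - 1) * (inverse (deriv a x) - 1 / deriv a \<tau>)" for x
  have aT: "a \<tau> > 0" using a_pos sp by simp
  have Pp: "PP a \<tau> s > 0" using PP_pos sp by simp
  have d: "deriv a s > 0" using pos1 sp by simp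
  note dP = PP_deriv[OF sp]
  note dH = H_deriv[OF sp]
  have dI: "DERIV (\<lambda>x. inverse (deriv a x)) s :> - (deriv (deriv a) s * inverse (deriv a s ^ Suc (Suc 0)))"
    by (rule DERIV_inverse_fun[OF d2[OF sp(1)]]) (use d in simp)
  have "DERIV Fm s :> ((- (a s * deriv a s / PP a \<tau> s)) * HH a \<tau> s + (- eta a \<tau> s) * PP a \<tau> s)
      + (((- (a s * deriv a s / PP a \<tau> s)) / a \<tau> - 0) * (inverse (deriv a s) - 1 / deriv a \<tau>)
      + (- (deriv (deriv a) s * inverse (deriv a s ^ Suc (Suc 0))) - 0) * (PP a \<tau> s / a \<tau> - 1))"
    unfolding Fm_def
    by (intro DERIV_add DERIV_mult DERIV_diff DERIV_cdivide DERIV_const dP dH dI)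
  moreover have "((- (a s * deriv a s / PP a \<tau> s)) * HH a \<tau> s + (- eta a \<tau> s) * PP a \<tau> s)
      + (((- (a s * deriv a s / PP a \<tau> s)) / a \<tau> - 0) * (inverse (deriv a s) - 1 / deriv a \<tau>)
      + (- (deriv (deriv a) s * inverse (deriv a s ^ Suc (Suc 0))) - 0) * (PP a \<tau> s / a \<tau> - 1))
    = - (a s * deriv a s / PP a \<tau> s) * (HH a \<tau> s + (1 / deriv a s - 1 / deriv a \<tau>) / a \<tau>)"
    using aT Pp d unfolding eta_def PP_def[symmetric]
    by (simp add: field_simps power2_eq_square)
  ultimately have "DERIV Fm s :> - (a s * deriv a s / PP a \<tau> s) * (HH a \<tau> s + (1 / deriv a s - 1 / deriv a \<tau>) / a \<tau>)"
    by simp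
  then show ?thesis
  proof (rule has_field_derivative_transform_within_open[of _ _ _ "{0<..<\<tau>}"])
    fix x assume "x \<in> {0<..<\<tau>}"
    then show "Fm x = fpos a \<tau> x" using fpos_eq2[of x \<tau>] by (simp add: Fm_def inverse_eq_divide)
  qed (use sp in auto)
qed

end

lemma at0_ge: "at (0::real) within {0..} = at_right 0"
  by (rule at_within_nhd[where S=UNIV]) auto

lemma cont_right0:
  fixes f :: "real \<Rightarrow> real"
  assumes c: "continuous_on {0<..} f" and l: "(f \<longlongrightarrow> f 0) (at_right 0)"
  shows "continuous_on {0..} f"
  unfolding continuous_on_eq_continuous_within
proof
  fix x :: real assume x: "x \<in> {0..}"
  show "continuous (at x within {0..}) f"
  proof (cases "x = 0")
    case True then show ?thesis using l by (simp add: continuous_within at0_ge)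
  next
    case False
    then have "isCont f x" using c x continuous_on_eq_continuous_at[of "{0<..}" f] by auto
    then show ?thesis by (rule continuous_at_imp_continuous_within)
  qed
qed

context SF begin

lemma d1_cont: "continuous_on {0<..} (deriv a)"
  using isCont_d1 by (intro continuous_at_imp_continuous_on) auto

lemma ee_cont: "continuous_on {0..} (ee a)"
proof (rule cont_right0)
  have "continuous_on {0<..} (\<lambda>s. (a s)\<^sup>2 / deriv a s)"
  proof -
    have "\<forall>s\<in>{0<..}. deriv a s \<noteq> 0" using pos1 by (metis greaterThan_iff less_irrefl)
    then show ?thesis by (intro continuous_intros d1_cont continuous_on_subset[OF contA_UNIV]) auto
  qed
  then show "continuous_on {0<..} (ee a)" by (rule continuous_on_cong[THEN iffD1, rotated 2]) (auto simp: ee_def)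
  have "\<forall>\<^sub>F s in at_right 0. (a s)\<^sup>2 / deriv a s = ee a s"
    by (simp add: eventually_at_filter ee_def)
  from tendsto_cong[OF this] elim have "(ee a \<longlongrightarrow> 0) (at_right 0)" by simp
  then show "(ee a \<longlongrightarrow> ee a 0) (at_right 0)" by (simp add: ee_def)
qed

lemma ad0_cont: "continuous_on {0..} (ad0 a L)"
proof (rule cont_right0)
  show "continuous_on {0<..} (ad0 a L)"
    using d1_cont by (rule continuous_on_cong[THEN iffD1, rotated 2]) (auto simp: ad0_def)
  have "\<forall>\<^sub>F s in at_right 0. deriv a s = ad0 a L s"
    by (simp add: eventually_at_filter ad0_def)
  from tendsto_cong[OF this] Llim have "(ad0 a L \<longlongrightarrow> L) (at_right 0)" by simp
  then show "(ad0 a L \<longlongrightarrow> ad0 a L 0) (at_right 0)" by (simp add: ad0_def)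
qed

definition E0 :: "(real \<times> real) set" where "E0 = {p. 0 < fst p \<and> 0 \<le> snd p \<and> snd p < fst p}"

lemma PP_cont: "continuous_on S (\<lambda>p. PP a (fst p) (snd p))"
  unfolding PP_def by (intro continuous_intros continuous_on_compose2[OF contA_UNIV]) auto

lemma aT_cont: "continuous_on S (\<lambda>p. a (fst p))"
  by (intro continuous_intros continuous_on_compose2[OF contA_UNIV]) auto

lemma HH_cont0: "continuous_on E0 (\<lambda>p. HH a (fst p) (snd p))"
  by (rule continuous_on_subset[OF HH_cont]) (auto simp: E0_def)

lemma d1T_cont: "continuous_on E0 (\<lambda>p. deriv a (fst p))"
  by (rule continuous_on_compose2[OF d1_cont continuous_on_fst[OF continuous_on_id]]) (auto simp: E0_def)

lemma Ft_cont: "continuous_on E0 (\<lambda>p. Ft a (fst p) (snd p))"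
  unfolding Ft_def
proof (intro continuous_intros PP_cont HH_cont0 aT_cont d1T_cont)
  show "continuous_on E0 (\<lambda>x. ee a (snd x))"
    by (rule continuous_on_compose2[OF ee_cont continuous_on_snd[OF continuous_on_id]]) (auto simp: E0_def)
  have h: "x \<in> E0 \<Longrightarrow> a (fst x) > 0 \<and> PP a (fst x) (snd x) > 0 \<and> deriv a (fst x) > 0" for x
    using a_pos[of "fst x"] PP_pos[of "snd x" "fst x"] pos1[of "fst x"] by (auto simp: E0_def)
  show "\<forall>x\<in>E0. a (fst x) * (PP a (fst x) (snd x) + a (fst x)) \<noteq> 0" using h by force
  show "\<forall>x\<in>E0. a (fst x) \<noteq> 0" using h by force
  show "\<forall>x\<in>E0. deriv a (fst x) \<noteq> 0" using h by force
qed

lemma ad0_cont0: "continuous_on E0 (\<lambda>x. ad0 a L (snd x))"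
  by (rule continuous_on_compose2[OF ad0_cont continuous_on_snd[OF continuous_on_id]]) (auto simp: E0_def)

lemma Gt_cont: "continuous_on E0 (\<lambda>p. Gt a L (fst p) (snd p))"
proof -
  have h: "x \<in> E0 \<Longrightarrow> a (fst x) > 0 \<and> deriv a (fst x) > 0" for x
    using a_pos[of "fst x"] pos1[of "fst x"] by (auto simp: E0_def)
  have c1: "continuous_on E0 (\<lambda>p. ad0 a L (snd p) / deriv a (fst p))"
    using h by (intro continuous_on_divide ad0_cont0 d1T_cont) force
  have c2: "continuous_on E0 (\<lambda>p. (1 - ad0 a L (snd p) / deriv a (fst p)) / a (fst p))"
    using h by (intro continuous_on_divide continuous_on_diff continuous_on_const c1 aT_cont) force
  have c3: "continuous_on E0 (\<lambda>p. ad0 a L (snd p) * HH a (fst p) (snd p))"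
    by (intro continuous_on_mult ad0_cont0 HH_cont0)
  show ?thesis unfolding Gt_def by (intro continuous_on_add c2 c3)
qed

end

context SF begin

definition EE :: "(real \<times> real) set" where "EE = {p. 0 < fst p \<and> - fst p < snd p \<and> snd p < fst p}"

lemma ff_cont: "continuous_on EE (\<lambda>p. ff a (fst p) (snd p))"
proof -
  define S where "S = EE \<inter> {p. snd p \<ge> 0}"
  define T where "T = EE \<inter> {p. snd p \<le> 0}"
  have ST: "S \<union> T = EE" by (auto simp: S_def T_def)
  have cS0: "closedin (top_of_set EE) S"
    unfolding S_def by (rule closedin_closed_Int) (intro closed_Collect_le continuous_intros)
  have cT0: "closedin (top_of_set EE) T"
    unfolding T_def by (rule closedin_closed_Int) (intro closed_Collect_le continuous_intros)
  have cS: "closedin (top_of_set (S \<union> T)) S" using cS0 ST by simp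
  have cT: "closedin (top_of_set (S \<union> T)) T" using cT0 ST by simp
  have f: "continuous_on S (\<lambda>p. Ft a (fst p) (snd p))"
    by (rule continuous_on_subset[OF Ft_cont]) (auto simp: S_def EE_def E0_def)
  have m1: "continuous_on T (\<lambda>p. (fst p, 0::real))"
    by (intro continuous_on_Pair continuous_on_fst continuous_on_id continuous_on_const)
  have m2: "continuous_on T (\<lambda>p. (fst p, - snd p))"
    by (intro continuous_on_Pair continuous_on_fst continuous_on_id continuous_on_minus continuous_on_snd)
  have s1: "(\<lambda>p. (fst p, 0::real)) ` T \<subseteq> E0" by (auto simp: T_def EE_def E0_def)
  have s2: "(\<lambda>p. (fst p, - snd p)) ` T \<subseteq> E0" by (auto simp: T_def EE_def E0_def)
  have g1: "continuous_on T (\<lambda>p. Ft a (fst p) 0)"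
    using continuous_on_compose2[OF Ft_cont m1 s1] by simp
  have g2: "continuous_on T (\<lambda>p. Ft a (fst p) (- snd p))"
    using continuous_on_compose2[OF Ft_cont m2 s2] by simp
  have g: "continuous_on T (\<lambda>p. 2 * Ft a (fst p) 0 - Ft a (fst p) (- snd p))"
    using g1 g2 by (intro continuous_on_diff continuous_on_mult continuous_on_const) auto
  have "continuous_on (S \<union> T) (\<lambda>p. if 0 \<le> snd p then Ft a (fst p) (snd p) else 2 * Ft a (fst p) 0 - Ft a (fst p) (- snd p))"
    by (rule continuous_on_cases_local[OF cS cT f g]) (auto simp: S_def T_def)
  then show ?thesis unfolding ST
  proof (rule continuous_on_cong[THEN iffD1, rotated 2])
    fix p assume p: "p \<in> EE"
    then show "(if 0 \<le> snd p then Ft a (fst p) (snd p) else 2 * Ft a (fst p) 0 - Ft a (fst p) (- snd p))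
      = ff a (fst p) (snd p)"
      by (auto simp: ff_def EE_def fpos_eq)
  qed auto
qed

lemma RR_tau: "RR a \<tau> \<tau> = 0"
  by (simp add: RR_def)

lemma RR_eq: "\<tau> > 0 \<Longrightarrow> - \<tau> < s \<Longrightarrow> s < \<tau> \<Longrightarrow>
   integral {s..\<tau>} (\<lambda>t. a t / sqrt ((a \<tau>)\<^sup>2 - (a t)\<^sup>2)) = RR a \<tau> s"
  using R_has_int by (rule integral_unique)

lemma rhoM_eq: "\<tau> > 0 \<Longrightarrow> rhoM a \<tau> = RR a \<tau> 0"
  unfolding rhoM_def by (rule RR_eq) auto

lemma RR_cont_s: "\<tau> > 0 \<Longrightarrow> continuous_on {lo..hi} (RR a \<tau>) \<Longrightarrow> True" by simp

lemma RR_cont_line: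
  assumes "\<tau> > 0" "- \<tau> < lo" "hi \<le> \<tau>"
  shows "continuous_on {lo..hi} (RR a \<tau>)"
proof -
  have m: "continuous_on {lo..hi} (\<lambda>s. (\<tau>, s))"
    by (intro continuous_on_Pair continuous_on_id continuous_on_const)
  have sub: "(\<lambda>s. (\<tau>, s)) ` {lo..hi} \<subseteq> {p. fst p > 0 \<and> - fst p < snd p \<and> snd p \<le> fst p}"
    using assms by auto
  show ?thesis using continuous_on_compose2[OF RR_cont m sub] by simp
qed

lemma RR_sym:
  assumes "\<tau> > 0" "0 \<le> s" "s < \<tau>"
  shows "RR a \<tau> (- s) = 2 * RR a \<tau> 0 - RR a \<tau> s"
proof -
  define \<phi> where "\<phi> = (\<lambda>t. a t / sqrt ((a \<tau>)\<^sup>2 - (a t)\<^sup>2))"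
  have ev: "\<phi> (- t) = \<phi> t" for t by (simp add: \<phi>_def even)
  have i: "\<phi> integrable_on {-s..\<tau>}" using R_has_int[of \<tau> "-s"] assms by (auto simp: \<phi>_def)
  have i0: "\<phi> integrable_on {0..\<tau>}" by (rule integrable_subinterval_real[OF i]) (use assms in auto)
  have "RR a \<tau> (- s) = integral {-s..\<tau>} \<phi>" using RR_eq[of \<tau> "-s"] assms by (simp add: \<phi>_def)
  also have "\<dots> = integral {-s..0} \<phi> + integral {0..\<tau>} \<phi>"
    using Henstock_Kurzweil_Integration.integral_combine[OF _ _ i, of 0] assms by simp
  also have "integral {-s..0} \<phi> = integral {0..s} \<phi>"
    using Henstock_Kurzweil_Integration.integral_reflect_real[of s 0 \<phi>] ev by simp
  also have "integral {0..\<tau>} \<phi> = integral {0..s} \<phi> + integral {s..\<tau>} \<phi>"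
    using Henstock_Kurzweil_Integration.integral_combine[OF _ _ i0, of s] assms by simp
  finally have "RR a \<tau> (- s) = 2 * integral {0..s} \<phi> + integral {s..\<tau>} \<phi>" by simp
  moreover have "RR a \<tau> 0 = integral {0..s} \<phi> + integral {s..\<tau>} \<phi>"
    using RR_eq[of \<tau> 0] assms Henstock_Kurzweil_Integration.integral_combine[OF _ _ i0, of s]
    by (simp add: \<phi>_def)
  moreover have "RR a \<tau> s = integral {s..\<tau>} \<phi>" using RR_eq[of \<tau> s] assms by (simp add: \<phi>_def)
  ultimately show ?thesis by simp
qed

lemma RR_deriv_neg:
  assumes "\<tau> > 0" "- \<tau> < s" "s < \<tau>" "s \<noteq> 0"
  shows "- (a s / PP a \<tau> s) < 0"
  using a_pos[OF assms(4)] PP_pos[of s \<tau>] assms by simp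

lemma RR_decr:
  assumes "\<tau> > 0" "- \<tau> < s1" "s1 < s2" "s2 < \<tau>"
  shows "RR a \<tau> s2 < RR a \<tau> s1"
proof -
  have mvt: "RR a \<tau> y < RR a \<tau> x" if "- \<tau> < x" "x < y" "y < \<tau>" "0 \<le> x \<or> y \<le> 0" for x y
  proof -
    have d: "DERIV (RR a \<tau>) z :> - (a z / PP a \<tau> z)" if "x \<le> z" "z \<le> y" for z
      using R_deriv[of \<tau> z] that \<open>- \<tau> < x\<close> \<open>y < \<tau>\<close> assms(1) by simp
    obtain z where z: "x < z" "z < y" "RR a \<tau> y - RR a \<tau> x = (y - x) * (- (a z / PP a \<tau> z))"
      using MVT2[of x y "RR a \<tau>" "\<lambda>z. - (a z / PP a \<tau> z)", OF \<open>x < y\<close> d] by blast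
    have "z \<noteq> 0" using z that by auto
    then have "- (a z / PP a \<tau> z) < 0" using RR_deriv_neg[of \<tau> z] z that assms(1) by simp
    then have "(y - x) * (- (a z / PP a \<tau> z)) < 0" using that by (intro mult_pos_neg) auto
    then show ?thesis using z by simp
  qed
  show ?thesis
  proof (cases "0 \<le> s1 \<or> s2 \<le> 0")
    case True then show ?thesis using mvt assms by simp
  next
    case False
    then have "RR a \<tau> s2 < RR a \<tau> 0" "RR a \<tau> 0 < RR a \<tau> s1" using mvt assms by auto
    then show ?thesis by simp
  qed
qed

lemma RR_exists:
  assumes "\<tau> > 0" "0 < \<rho>" "\<rho> < 2 * RR a \<tau> 0"
  shows "\<exists>s. - \<tau> < s \<and> s < \<tau> \<and> RR a \<tau> s = \<rho>"
proof -
  have half: "\<exists>s. 0 \<le> s \<and> s < \<tau> \<and> RR a \<tau> s = r" if r: "0 < r" "r \<le> RR a \<tau> 0" for r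
  proof -
    have "continuous_on {0..\<tau>} (RR a \<tau>)" by (rule RR_cont_line) (use assms in auto)
    from IVT2'[of "RR a \<tau>" \<tau> r 0, OF _ _ _ this] r assms
    obtain s where "0 \<le> s" "s \<le> \<tau>" "RR a \<tau> s = r" by (auto simp: RR_tau)
    moreover have "s \<noteq> \<tau>" using \<open>RR a \<tau> s = r\<close> r RR_tau by auto
    ultimately show ?thesis by auto
  qed
  show ?thesis
  proof (cases "\<rho> \<le> RR a \<tau> 0")
    case True
    then obtain s where "0 \<le> s" "s < \<tau>" "RR a \<tau> s = \<rho>" using half assms by blast
    then show ?thesis using assms by (intro exI[of _ s]) auto
  next
    case False
    then obtain s where s: "0 \<le> s" "s < \<tau>" "RR a \<tau> s = 2 * RR a \<tau> 0 - \<rho>" using half[of "2 * RR a \<tau> 0 - \<rho>"] assms by auto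
    have "RR a \<tau> (- s) = \<rho>" using RR_sym[of \<tau> s] s assms by simp
    then show ?thesis using s by (intro exI[of _ "- s"]) auto
  qed
qed

lemma domD_iff: "(\<tau>, \<rho>) \<in> domD a \<longleftrightarrow> \<tau> > 0 \<and> 0 < \<rho> \<and> \<rho> < 2 * RR a \<tau> 0"
  by (auto simp: domD_def rhoM_eq)

lemma t0_prop:
  assumes "(\<tau>, \<rho>) \<in> domD a"
  shows "- \<tau> < t0 a \<tau> \<rho> \<and> t0 a \<tau> \<rho> < \<tau> \<and> RR a \<tau> (t0 a \<tau> \<rho>) = \<rho>"
proof -
  have h: "\<tau> > 0" "0 < \<rho>" "\<rho> < 2 * RR a \<tau> 0" using assms domD_iff by auto
  have ex1: "\<exists>!s. - \<tau> < s \<and> s < \<tau> \<and> \<rho> = integral {s..\<tau>} (\<lambda>t. a t / sqrt ((a \<tau>)\<^sup>2 - (a t)\<^sup>2))"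
  proof -
    obtain s where s: "- \<tau> < s" "s < \<tau>" "RR a \<tau> s = \<rho>" using RR_exists h by blast
    show ?thesis
    proof (rule ex1I[of _ s])
      show "- \<tau> < s \<and> s < \<tau> \<and> \<rho> = integral {s..\<tau>} (\<lambda>t. a t / sqrt ((a \<tau>)\<^sup>2 - (a t)\<^sup>2))"
        using s RR_eq h by simp
      fix y assume y: "- \<tau> < y \<and> y < \<tau> \<and> \<rho> = integral {y..\<tau>} (\<lambda>t. a t / sqrt ((a \<tau>)\<^sup>2 - (a t)\<^sup>2))"
      then have "RR a \<tau> y = \<rho>" using RR_eq h by simp
      show "y = s"
      proof (rule ccontr)
        assume "y \<noteq> s"
        then have "y < s \<or> s < y" by auto
        then show False using RR_decr[of \<tau> y s] RR_decr[of \<tau> s y] s y \<open>RR a \<tau> y = \<rho>\<close> h by auto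
      qed
    qed
  qed
  from theI'[OF ex1] have "- \<tau> < t0 a \<tau> \<rho> \<and> t0 a \<tau> \<rho> < \<tau> \<and> \<rho> = integral {t0 a \<tau> \<rho>..\<tau>} (\<lambda>t. a t / sqrt ((a \<tau>)\<^sup>2 - (a t)\<^sup>2))"
    unfolding t0_def .
  then show ?thesis using RR_eq h by auto
qed

lemma t0_unique:
  assumes "(\<tau>, \<rho>) \<in> domD a" "- \<tau> < s" "s < \<tau>" "RR a \<tau> s = \<rho>"
  shows "t0 a \<tau> \<rho> = s"
proof (rule ccontr)
  assume ne: "t0 a \<tau> \<rho> \<noteq> s"
  have "\<tau> > 0" using assms domD_iff by auto
  then show False using t0_prop[OF assms(1)] assms RR_decr[of \<tau> "t0 a \<tau> \<rho>" s] RR_decr[of \<tau> s "t0 a \<tau> \<rho>"] ne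
    by (cases "t0 a \<tau> \<rho> < s") auto
qed

end

lemma deriv_lim:
  fixes k g :: "real \<Rightarrow> real"
  assumes x: "lo < x" "x < hi"
    and ck: "continuous_on {lo<..<hi} k" and cg: "continuous_on {lo<..<hi} g"
    and d: "\<And>y. lo < y \<Longrightarrow> y < hi \<Longrightarrow> y \<noteq> x \<Longrightarrow> DERIV k y :> g y"
  shows "DERIV k x :> g x"
  unfolding has_field_derivative_iff
proof (rule tendstoI)
  fix e :: real assume e: "e > 0"
  have "isCont g x" using cg x continuous_on_eq_continuous_at[of "{lo<..<hi}" g] by auto
  then obtain d1 where d1: "d1 > 0" "\<And>y. dist y x < d1 \<Longrightarrow> dist (g y) (g x) < e"
    using e unfolding continuous_at_eps_delta by blast
  define d where "d = min d1 (min (x - lo) (hi - x))"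
  have dp: "d > 0" using d1 x by (simp add: d_def)
  have main: "dist ((k y - k x) / (y - x)) (g x) < e" if y: "y \<noteq> x" "dist y x < d" for y
  proof -
    define l where "l = min x y"
    define u where "u = max x y"
    have lu: "l < u" "lo < l" "u < hi" using y x by (auto simp: l_def u_def d_def dist_real_def)
    have cont: "continuous_on {l..u} k" by (rule continuous_on_subset[OF ck]) (use lu in auto)
    have dif: "k differentiable (at z)" if "l < z" "z < u" for z
    proof -
      have "z \<noteq> x" using that by (auto simp: l_def u_def)
      then have "DERIV k z :> g z" using d[of z] that lu by simp
      then show ?thesis by (auto simp: real_differentiable_def)
    qed
    obtain m z where z: "l < z" "z < u" "DERIV k z :> m" "k u - k l = (u - l) * m"
      using MVT[OF lu(1) cont dif] by blast
    have "z \<noteq> x" using z by (auto simp: l_def u_def)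
    then have "DERIV k z :> g z" using d[of z] z lu by simp
    then have m: "m = g z" using z(3) DERIV_unique by blast
    have q: "(k y - k x) / (y - x) = (k u - k l) / (u - l)"
      using y by (cases "x < y") (auto simp: l_def u_def divide_simps algebra_simps)
    have "(k y - k x) / (y - x) = g z" using q z(4) lu m by simp
    moreover have "dist z x < d1"
      using z y by (auto simp: l_def u_def d_def dist_real_def min_def max_def split: if_splits)
    ultimately show ?thesis using d1 by simp
  qed
  show "\<forall>\<^sub>F y in at x. dist ((k y - k x) / (y - x)) (g x) < e"
    unfolding eventually_at using dp main by blast
qed

context SF begin

lemma open_EE: "open EE"
  unfolding EE_def by (intro open_Collect_conj open_Collect_less continuous_intros)

lemma isCont_RR: "p \<in> EE \<Longrightarrow> isCont (\<lambda>p. RR a (fst p) (snd p)) p"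
proof -
  assume p: "p \<in> EE"
  have "continuous_on EE (\<lambda>p. RR a (fst p) (snd p))"
    by (rule continuous_on_subset[OF RR_cont]) (auto simp: EE_def)
  then show ?thesis using p open_EE continuous_on_eq_continuous_at by blast
qed

lemma t0_cont: "continuous_on (domD a) (\<lambda>p. t0 a (fst p) (snd p))"
  unfolding continuous_on_iff
proof (intro ballI allI impI)
  fix p :: "real \<times> real" and e :: real
  assume p: "p \<in> domD a" and e: "e > 0"
  obtain \<tau>0 \<rho>0 where pp: "p = (\<tau>0, \<rho>0)" by (cases p)
  define s0 where "s0 = t0 a \<tau>0 \<rho>0"
  have t0p: "\<tau>0 > 0" using p pp domD_iff by auto
  have s0: "- \<tau>0 < s0" "s0 < \<tau>0" "RR a \<tau>0 s0 = \<rho>0" using t0_prop[of \<tau>0 \<rho>0] p pp by (auto simp: s0_def)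
  define e' where "e' = min e ((\<tau>0 - \<bar>s0\<bar>) / 2)"
  have e'3: "e' \<le> (\<tau>0 - \<bar>s0\<bar>) / 2" unfolding e'_def by (rule min.cobounded2)
  have e': "e' > 0" "e' \<le> e" "e' \<le> (\<tau>0 - \<bar>s0\<bar>) / 2" using e s0 e'3 unfolding e'_def by auto
  define s1 where "s1 = s0 - e'"
  define s2 where "s2 = s0 + e'"
  define d3 where "d3 = \<tau>0 - \<bar>s0\<bar> - e'"
  have d3: "d3 > 0" "\<bar>s1\<bar> \<le> \<tau>0 - d3" "\<bar>s2\<bar> \<le> \<tau>0 - d3" using e' by (auto simp: d3_def s1_def s2_def)
  have g1: "RR a \<tau>0 s1 > \<rho>0" using RR_decr[of \<tau>0 s1 s0] s0 d3 e' t0p by (auto simp: s1_def)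
  have g2: "RR a \<tau>0 s2 < \<rho>0" using RR_decr[of \<tau>0 s0 s2] s0 d3 e' t0p by (auto simp: s2_def)
  define \<gamma> where "\<gamma> = min (RR a \<tau>0 s1 - \<rho>0) (\<rho>0 - RR a \<tau>0 s2)"
  have \<gamma>: "\<gamma> > 0" using g1 g2 by (simp add: \<gamma>_def)
  have E1: "(\<tau>0, s1) \<in> EE" "(\<tau>0, s2) \<in> EE" using d3 t0p by (auto simp: EE_def)
  obtain d1 where d1: "d1 > 0" "\<And>q. dist q (\<tau>0, s1) < d1 \<Longrightarrow> dist (RR a (fst q) (snd q)) (RR a \<tau>0 s1) < \<gamma>/2"
    using isCont_RR[OF E1(1)] \<gamma> unfolding continuous_at_eps_delta
    by (metis fst_conv half_gt_zero snd_conv)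
  obtain d2 where d2: "d2 > 0" "\<And>q. dist q (\<tau>0, s2) < d2 \<Longrightarrow> dist (RR a (fst q) (snd q)) (RR a \<tau>0 s2) < \<gamma>/2"
    using isCont_RR[OF E1(2)] \<gamma> unfolding continuous_at_eps_delta
    by (metis fst_conv half_gt_zero snd_conv)
  define d where "d = min (min d1 d2) (min d3 (\<gamma>/2))"
  have dp: "d > 0" using d1 d2 d3 \<gamma> by (simp add: d_def)
  show "\<exists>d>0. \<forall>x'\<in>domD a. dist x' p < d \<longrightarrow> dist (t0 a (fst x') (snd x')) (t0 a (fst p) (snd p)) < e"
  proof (intro exI[of _ d] conjI ballI impI dp)
    fix q assume q: "q \<in> domD a" "dist q p < d"
    obtain \<tau> \<rho> where qq: "q = (\<tau>, \<rho>)" by (cases q)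
    have tt: "\<bar>\<tau> - \<tau>0\<bar> < d" using dist_fst_le[of q p] q by (simp add: qq pp dist_real_def)
    have rr: "\<bar>\<rho> - \<rho>0\<bar> < d" using dist_snd_le[of q p] q by (simp add: qq pp dist_real_def)
    have tp: "\<tau> > 0" using q qq domD_iff by auto
    have r1: "dist (\<tau>, s1) (\<tau>0, s1) < d1" using tt by (simp add: dist_Pair_Pair dist_real_def d_def)
    have r2: "dist (\<tau>, s2) (\<tau>0, s2) < d2" using tt by (simp add: dist_Pair_Pair dist_real_def d_def)
    have a1: "\<bar>RR a \<tau> s1 - RR a \<tau>0 s1\<bar> < \<gamma>/2" using d1(2)[OF r1] by (simp add: dist_real_def)
    have a2: "\<bar>RR a \<tau> s2 - RR a \<tau>0 s2\<bar> < \<gamma>/2" using d2(2)[OF r2] by (simp add: dist_real_def)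
    have a3: "\<bar>\<rho> - \<rho>0\<bar> < \<gamma>/2" using rr by (simp add: d_def)
    have g: "\<gamma> \<le> RR a \<tau>0 s1 - \<rho>0" "\<gamma> \<le> \<rho>0 - RR a \<tau>0 s2" by (simp_all add: \<gamma>_def)
    have h1: "RR a \<tau> s1 > \<rho>"
      using a1 a3 g(1) abs_less_iff[of "RR a \<tau> s1 - RR a \<tau>0 s1" "\<gamma>/2"] abs_less_iff[of "\<rho> - \<rho>0" "\<gamma>/2"]
      by linarith
    have h2: "RR a \<tau> s2 < \<rho>"
      using a2 a3 g(2) abs_less_iff[of "RR a \<tau> s2 - RR a \<tau>0 s2" "\<gamma>/2"] abs_less_iff[of "\<rho> - \<rho>0" "\<gamma>/2"]
      by linarith
    have in1: "- \<tau> < s1" "s2 < \<tau>" using d3 tt by (auto simp: d_def)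
    have s12: "s1 < s2" using e' by (simp add: s1_def s2_def)
    define t where "t = t0 a \<tau> \<rho>"
    have t: "- \<tau> < t" "t < \<tau>" "RR a \<tau> t = \<rho>" using t0_prop[of \<tau> \<rho>] q qq by (auto simp: t_def)
    have "s1 < t"
    proof (rule ccontr)
      assume "\<not> s1 < t"
      then have "t = s1 \<or> t < s1" by auto
      then show False using RR_decr[of \<tau> t s1] t h1 in1 s12 tp by auto
    qed
    moreover have "t < s2"
    proof (rule ccontr)
      assume "\<not> t < s2"
      then have "t = s2 \<or> s2 < t" by auto
      then show False using RR_decr[of \<tau> s2 t] t h2 in1 s12 tp by auto
    qed
    ultimately have "\<bar>t - s0\<bar> < e'" by (auto simp: s1_def s2_def)
    then show "dist (t0 a (fst q) (snd q)) (t0 a (fst p) (snd p)) < e"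
      using e' by (simp add: qq pp t_def s0_def dist_real_def)
  qed
qed

end

context SF begin

definition Fd :: "real \<Rightarrow> real \<Rightarrow> real" where
  "Fd \<tau> x = - (a x * deriv a x / PP a \<tau> x) * (HH a \<tau> x + (1 / deriv a x - 1 / deriv a \<tau>) / a \<tau>)"

lemma ff_deriv:
  assumes "-\<tau> < s" "s < \<tau>" "s \<noteq> 0"
  shows "DERIV (ff a \<tau>) s :> Fd \<tau> \<bar>s\<bar>"
proof (cases "s > 0")
  case True
  have "DERIV (fpos a \<tau>) s :> Fd \<tau> \<bar>s\<bar>" using F_deriv[of s \<tau>] True assms by (simp add: Fd_def)
  then show ?thesis
    by (rule has_field_derivative_transform_within_open[of _ _ _ "{0<..<\<tau>}"]) (use True assms in \<open>auto simp: ff_def\<close>)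
next
  case False
  then have sn: "s < 0" using assms by simp
  have d: "DERIV (fpos a \<tau>) (- s) :> Fd \<tau> \<bar>s\<bar>" using F_deriv[of "- s" \<tau>] sn assms by (simp add: Fd_def)
  have dm: "DERIV (\<lambda>x. - x) s :> - 1" by (auto intro!: derivative_eq_intros)
  have "DERIV (\<lambda>x. fpos a \<tau> (- x)) s :> Fd \<tau> \<bar>s\<bar> * (- 1)"
    using DERIV_chain2[where f="fpos a \<tau>" and g="\<lambda>x. - x", OF _ dm] d by simp
  then have "DERIV (\<lambda>x. 2 * fpos a \<tau> 0 - fpos a \<tau> (- x)) s :> 0 - Fd \<tau> \<bar>s\<bar> * (- 1)"
    by (intro DERIV_diff DERIV_const)
  then have "DERIV (\<lambda>x. 2 * fpos a \<tau> 0 - fpos a \<tau> (- x)) s :> Fd \<tau> \<bar>s\<bar>" by simp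
  then show ?thesis
    by (rule has_field_derivative_transform_within_open[of _ _ _ "{-\<tau><..<0}"]) (use sn assms in \<open>auto simp: ff_def\<close>)
qed

lemma PP_abs: "PP a \<tau> \<bar>s\<bar> = PP a \<tau> s"
  by (simp add: PP_def a_abs)

lemma t0_line_cont:
  assumes "\<tau> > 0"
  shows "continuous_on {0<..<2 * RR a \<tau> 0} (t0 a \<tau>)"
proof -
  have m: "continuous_on {0<..<2 * RR a \<tau> 0} (\<lambda>r. (\<tau>, r))"
    by (intro continuous_on_Pair continuous_on_id continuous_on_const)
  have sub: "(\<lambda>r. (\<tau>, r)) ` {0<..<2 * RR a \<tau> 0} \<subseteq> domD a" using assms by (auto simp: domD_iff)
  show ?thesis using continuous_on_compose2[OF t0_cont m sub] by simp
qed

lemma k_deriv_ne: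
  assumes D: "(\<tau>, \<rho>) \<in> domD a" and ne: "t0 a \<tau> \<rho> \<noteq> 0"
  shows "DERIV (\<lambda>r. ff a \<tau> (t0 a \<tau> r)) \<rho> :> Gt a L \<tau> \<bar>t0 a \<tau> \<rho>\<bar>"
proof -
  define s where "s = t0 a \<tau> \<rho>"
  have h: "\<tau> > 0" "0 < \<rho>" "\<rho> < 2 * RR a \<tau> 0" using D domD_iff by auto
  have s: "- \<tau> < s" "s < \<tau>" "RR a \<tau> s = \<rho>" using t0_prop[OF D] by (auto simp: s_def)
  have sn: "s \<noteq> 0" using ne by (simp add: s_def)
  have dR: "DERIV (RR a \<tau>) (t0 a \<tau> \<rho>) :> - (a s / PP a \<tau> s)" using R_deriv[of \<tau> s] s h by (simp add: s_def)
  have sa: "\<bar>s\<bar> < \<tau>" using s by auto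
  have neq: "- (a s / PP a \<tau> s) \<noteq> 0" using a_pos[OF sn] PP_pos[OF sa] by auto
  have inj: "\<And>y. 0 < y \<Longrightarrow> y < 2 * RR a \<tau> 0 \<Longrightarrow> RR a \<tau> (t0 a \<tau> y) = y"
    using t0_prop h by (auto simp: domD_iff)
  have ct: "isCont (t0 a \<tau>) \<rho>"
    using t0_line_cont[OF h(1)] h continuous_on_eq_continuous_at[of "{0<..<2 * RR a \<tau> 0}" "t0 a \<tau>"] by auto
  have dt: "DERIV (t0 a \<tau>) \<rho> :> inverse (- (a s / PP a \<tau> s))"
    by (rule DERIV_inverse_function[OF dR neq h(2) h(3) inj ct])
  have dff: "DERIV (ff a \<tau>) (t0 a \<tau> \<rho>) :> Fd \<tau> \<bar>s\<bar>" using ff_deriv[of \<tau> s] s sn by (simp add: s_def)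
  have "DERIV (\<lambda>r. ff a \<tau> (t0 a \<tau> r)) \<rho> :> Fd \<tau> \<bar>s\<bar> * inverse (- (a s / PP a \<tau> s))"
    by (rule DERIV_chain2[OF dff dt])
  moreover have "Fd \<tau> \<bar>s\<bar> * inverse (- (a s / PP a \<tau> s)) = Gt a L \<tau> \<bar>s\<bar>"
  proof -
    define x where "x = \<bar>s\<bar>"
    have x: "x > 0" "x < \<tau>" using sn s by (auto simp: x_def)
    have ax: "a s = a x" "PP a \<tau> s = PP a \<tau> x" by (simp_all add: x_def a_abs PP_abs)
    have p: "a x > 0" "PP a \<tau> x > 0" "deriv a x > 0" "a \<tau> > 0" "deriv a \<tau> > 0"
      using a_pos[of x] PP_pos[of x \<tau>] pos1[of x] a_pos[of \<tau>] pos1[of \<tau>] x by auto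
    show ?thesis unfolding ax x_def[symmetric] using p x
      by (simp add: Fd_def Gt_def ad0_def field_simps)
  qed
  ultimately show ?thesis by (simp add: s_def)
qed

lemma k_deriv:
  assumes D: "(\<tau>, \<rho>) \<in> domD a"
  shows "DERIV (\<lambda>r. ff a \<tau> (t0 a \<tau> r)) \<rho> :> Gt a L \<tau> \<bar>t0 a \<tau> \<rho>\<bar>"
proof (cases "t0 a \<tau> \<rho> = 0")
  case False then show ?thesis using k_deriv_ne D by simp
next
  case True
  have h: "\<tau> > 0" "0 < \<rho>" "\<rho> < 2 * RR a \<tau> 0" using D domD_iff by auto
  define I where "I = {0<..<2 * RR a \<tau> 0}"
  have inD: "r \<in> I \<Longrightarrow> (\<tau>, r) \<in> domD a" for r using h by (auto simp: I_def domD_iff)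
  have ct: "continuous_on I (t0 a \<tau>)" using t0_line_cont[OF h(1)] by (simp add: I_def)
  have ck: "continuous_on I (\<lambda>r. ff a \<tau> (t0 a \<tau> r))"
  proof -
    have m: "continuous_on I (\<lambda>r. (\<tau>, t0 a \<tau> r))"
      by (intro continuous_on_Pair continuous_on_const ct)
    have sub: "(\<lambda>r. (\<tau>, t0 a \<tau> r)) ` I \<subseteq> EE" using t0_prop inD h by (force simp: EE_def)
    show ?thesis using continuous_on_compose2[OF ff_cont m sub] by simp
  qed
  have cg: "continuous_on I (\<lambda>r. Gt a L \<tau> \<bar>t0 a \<tau> r\<bar>)"
  proof -
    have m: "continuous_on I (\<lambda>r. (\<tau>, \<bar>t0 a \<tau> r\<bar>))"
      by (intro continuous_on_Pair continuous_on_const continuous_on_rabs ct)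
    have sub: "(\<lambda>r. (\<tau>, \<bar>t0 a \<tau> r\<bar>)) ` I \<subseteq> E0" using t0_prop inD h by (force simp: E0_def)
    show ?thesis using continuous_on_compose2[OF Gt_cont m sub] by simp
  qed
  show ?thesis
  proof (rule deriv_lim[OF h(2) h(3) ck[unfolded I_def] cg[unfolded I_def]])
    fix y assume y: "0 < y" "y < 2 * RR a \<tau> 0" "y \<noteq> \<rho>"
    have Dy: "(\<tau>, y) \<in> domD a" using y h by (auto simp: domD_iff)
    have "t0 a \<tau> y \<noteq> 0"
    proof
      assume "t0 a \<tau> y = 0"
      then have "y = RR a \<tau> 0" using t0_prop[OF Dy] by simp
      moreover have "\<rho> = RR a \<tau> 0" using t0_prop[OF D] True by simp
      ultimately show False using y by simp
    qed
    then show "DERIV (\<lambda>r. ff a \<tau> (t0 a \<tau> r)) y :> Gt a L \<tau> \<bar>t0 a \<tau> y\<bar>" using k_deriv_ne Dy by simp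
  qed
qed

definition Dg :: "real \<times> real \<Rightarrow> real" where
  "Dg p = 2 * deriv a (fst p) * (1 - deriv a (fst p) * ff a (fst p) (t0 a (fst p) (snd p)))
          * Gt a L (fst p) \<bar>t0 a (fst p) (snd p)\<bar>"

lemma gtt_deriv:
  assumes D: "(\<tau>, \<rho>) \<in> domD a"
  shows "DERIV (\<lambda>r. gtt a \<tau> r) \<rho> :> Dg (\<tau>, \<rho>)"
proof -
  note k = k_deriv[OF D]
  have "DERIV (\<lambda>r. - (1 - deriv a \<tau> * ff a \<tau> (t0 a \<tau> r))\<^sup>2) \<rho> :>
      - (of_nat 2 * ((0 - deriv a \<tau> * Gt a L \<tau> \<bar>t0 a \<tau> \<rho>\<bar>) * (1 - deriv a \<tau> * ff a \<tau> (t0 a \<tau> \<rho>)) ^ (2 - Suc 0)))"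
    by (intro DERIV_minus DERIV_power DERIV_diff DERIV_const DERIV_cmult k)
  then show ?thesis unfolding gtt_def Dg_def by (simp add: algebra_simps)
qed

lemma Dg_cont: "continuous_on (domD a) Dg"
proof -
  have t0c: "continuous_on (domD a) (\<lambda>p. t0 a (fst p) (snd p))" by (rule t0_cont)
  have dom: "p \<in> domD a \<Longrightarrow> fst p > 0 \<and> - fst p < t0 a (fst p) (snd p) \<and> t0 a (fst p) (snd p) < fst p" for p
    using t0_prop[of "fst p" "snd p"] domD_iff[of "fst p" "snd p"] by auto
  have c1: "continuous_on (domD a) (\<lambda>p. deriv a (fst p))"
    by (rule continuous_on_compose2[OF d1_cont continuous_on_fst[OF continuous_on_id]]) (use dom in auto)
  have c2: "continuous_on (domD a) (\<lambda>p. ff a (fst p) (t0 a (fst p) (snd p)))"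
  proof -
    have m: "continuous_on (domD a) (\<lambda>p. (fst p, t0 a (fst p) (snd p)))"
      by (intro continuous_on_Pair continuous_on_fst continuous_on_id t0c)
    have sub: "(\<lambda>p. (fst p, t0 a (fst p) (snd p))) ` domD a \<subseteq> EE" using dom by (force simp: EE_def)
    show ?thesis using continuous_on_compose2[OF ff_cont m sub] by simp
  qed
  have c3: "continuous_on (domD a) (\<lambda>p. Gt a L (fst p) \<bar>t0 a (fst p) (snd p)\<bar>)"
  proof -
    have m: "continuous_on (domD a) (\<lambda>p. (fst p, \<bar>t0 a (fst p) (snd p)\<bar>))"
      by (intro continuous_on_Pair continuous_on_fst continuous_on_id continuous_on_rabs t0c)
    have sub: "(\<lambda>p. (fst p, \<bar>t0 a (fst p) (snd p)\<bar>)) ` domD a \<subseteq> E0" using dom by (force simp: E0_def)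
    show ?thesis using continuous_on_compose2[OF Gt_cont m sub] by simp
  qed
  show ?thesis unfolding Dg_def
    by (intro continuous_on_mult continuous_on_diff continuous_on_const c1 c2 c3)
qed

end

lemma a_le_s_deriv:
  fixes a :: "real \<Rightarrow> real"
  assumes a0: "a 0 = 0" and ca: "continuous_on {0..} a"
    and d1: "\<And>t. 0 < t \<Longrightarrow> (a has_real_derivative deriv a t) (at t)"
    and d2: "\<And>t. 0 < t \<Longrightarrow> (deriv a has_real_derivative deriv (deriv a) t) (at t)"
    and nn: "\<And>t. 0 < t \<Longrightarrow> t < \<epsilon> \<Longrightarrow> deriv (deriv a) t \<ge> 0"
    and s: "0 < s" "s < \<epsilon>"
  shows "a s \<le> s * deriv a s"
proof -
  have cont: "continuous_on {0..s} a" by (rule continuous_on_subset[OF ca]) auto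
  have dif: "a differentiable (at x)" if "0 < x" "x < s" for x
    using d1[of x] that by (auto simp: real_differentiable_def)
  obtain l z where z: "0 < z" "z < s" "DERIV a z :> l" "a s - a 0 = (s - 0) * l"
    using MVT[OF s(1) cont dif] by blast
  have l: "l = deriv a z" using DERIV_unique[OF z(3) d1[OF z(1)]] .
  have "deriv a z \<le> deriv a s"
  proof -
    have "\<exists>w. z < w \<and> w < s \<and> deriv a s - deriv a z = (s - z) * deriv (deriv a) w"
      by (rule MVT2) (use z s in \<open>auto intro!: d2\<close>)
    then obtain w where w: "z < w" "w < s" "deriv a s - deriv a z = (s - z) * deriv (deriv a) w" by blast
    have "deriv (deriv a) w \<ge> 0" using nn[of w] w z s by simp
    then have "(s - z) * deriv (deriv a) w \<ge> 0" using z by simp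
    then show ?thesis using w by simp
  qed
  then show ?thesis using z l a0 s by (simp add: mult_left_mono)
qed

lemma SF_intro:
  fixes a :: "real \<Rightarrow> real"
  assumes sr: "strongly_regular_scale_factor a"
    and even: "\<And>t. a (- t) = a t"
    and cases: "((deriv a \<longlongrightarrow> 0) (at_right 0) \<and>
                  (\<exists>\<epsilon>>0. \<forall>t. 0 < t \<and> t < \<epsilon> \<longrightarrow> deriv (deriv a) t \<ge> 0))
              \<or> (\<exists>L>0. (deriv a \<longlongrightarrow> L) (at_right 0))"
  shows "\<exists>K L. SF a K L"
proof -
  from sr obtain K where K: "K \<ge> 1" "\<forall>t>0. a t * deriv (deriv a) t / (deriv a t)\<^sup>2 \<ge> - K"
    and reg: "regular_scale_factor a" unfolding strongly_regular_scale_factor_def by blast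
  note R = reg[unfolded regular_scale_factor_def]
  have a0: "a 0 = 0" and smono: "strict_mono_on {0..} a" and ca: "continuous_on {0..} a"
    and c2: "continuous_on {0<..} (deriv (deriv a))" using R by auto
  have d1: "(a has_real_derivative deriv a t) (at t)" if "0 < t" for t
    using R that DERIV_deriv_iff_real_differentiable by blast
  have d2: "(deriv a has_real_derivative deriv (deriv a) t) (at t)" if "0 < t" for t
    using R that DERIV_deriv_iff_real_differentiable by blast
  have pos1: "deriv a t > 0" if t: "0 < t" for t
  proof -
    have ne: "deriv a t \<noteq> 0" using R t by auto
    have "\<not> deriv a t < 0"
    proof
      assume "deriv a t < 0"
      from DERIV_neg_dec_right[OF d1[OF t] this] obtain d where d: "d > 0" "\<And>h. h > 0 \<Longrightarrow> h < d \<Longrightarrow> a (t + h) < a t"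
        by blast
      have "a t < a (t + d/2)" using smono t d unfolding strict_mono_on_def by auto
      moreover have "a (t + d/2) < a t" using d by simp
      ultimately show False by simp
    qed
    then show ?thesis using ne by simp
  qed
  have apos: "a t > 0" if "0 < t" for t
    using smono that a0 unfolding strict_mono_on_def by (metis atLeast_iff order_refl less_imp_le)
  have Kbd: "\<bar>deriv (deriv a) t / (deriv a t)\<^sup>2\<bar> \<le> K / a t" if t: "0 < t" for t
  proof -
    define c where "c = deriv (deriv a) t / (deriv a t)\<^sup>2"
    have h: "a t * deriv (deriv a) t / (deriv a t)\<^sup>2 \<le> 1" using R t by blast
    have up: "a t * c \<le> 1" unfolding c_def using h by (simp only: times_divide_eq_right)
    have lo: "a t * c \<ge> - K" using K t by (simp add: c_def)
    have "\<bar>a t * c\<bar> \<le> K" using up lo K(1) by (simp add: abs_le_iff)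
    then have "a t * \<bar>c\<bar> \<le> K" using apos[OF t] by (simp add: abs_mult)
    then show ?thesis using apos[OF t] by (simp add: c_def field_simps)
  qed
  have alim: "(a \<longlongrightarrow> 0) (at_right 0)"
  proof -
    have "continuous (at 0 within {0..}) a" using ca by (simp add: continuous_on_eq_continuous_within)
    then show ?thesis using a0 by (simp add: continuous_within at0_ge)
  qed
  obtain L where L: "L \<ge> 0" "(deriv a \<longlongrightarrow> L) (at_right 0)" "((\<lambda>s. (a s)\<^sup>2 / deriv a s) \<longlongrightarrow> 0) (at_right 0)"
  proof (cases "\<exists>L>0. (deriv a \<longlongrightarrow> L) (at_right 0)")
    case True
    then obtain L where L: "L > 0" "(deriv a \<longlongrightarrow> L) (at_right 0)" by blast
    have "((\<lambda>s. (a s)\<^sup>2 / deriv a s) \<longlongrightarrow> 0\<^sup>2 / L) (at_right 0)"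
      using L by (intro tendsto_divide tendsto_power alim) auto
    then have h: "((\<lambda>s. (a s)\<^sup>2 / deriv a s) \<longlongrightarrow> 0) (at_right 0)" by simp
    show ?thesis by (rule that[of L]) (use L h in auto)
  next
    case False
    then obtain \<epsilon> where e: "\<epsilon> > 0" "\<And>t. 0 < t \<Longrightarrow> t < \<epsilon> \<Longrightarrow> deriv (deriv a) t \<ge> 0"
      and l0: "(deriv a \<longlongrightarrow> 0) (at_right 0)" using cases by blast
    have ev: "\<forall>\<^sub>F s in at_right 0. 0 < s \<and> s < \<epsilon>"
      using e(1) by (simp add: eventually_at_right_field) (metis)
    have b1: "\<forall>\<^sub>F s in at_right 0. 0 \<le> (a s)\<^sup>2 / deriv a s"
      using ev by eventually_elim (use pos1 in \<open>auto intro!: divide_nonneg_pos\<close>)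
    have b2: "\<forall>\<^sub>F s in at_right 0. (a s)\<^sup>2 / deriv a s \<le> a s * s"
      using ev
    proof eventually_elim
      case (elim s)
      have le: "a s \<le> s * deriv a s" by (rule a_le_s_deriv[OF a0 ca d1 d2 e(2)]) (use elim in auto)
      have p: "deriv a s > 0" "a s > 0" using pos1 apos elim by auto
      have "(a s)\<^sup>2 / deriv a s = a s * (a s / deriv a s)" by (simp add: power2_eq_square)
      also have "\<dots> \<le> a s * s" using le p by (intro mult_left_mono) (auto simp: divide_le_eq mult.commute)
      finally show ?case .
    qed
    have "((\<lambda>s. a s * s) \<longlongrightarrow> 0 * 0) (at_right 0)"
      by (intro tendsto_mult alim) (simp add: tendsto_ident_at)
    then have h: "((\<lambda>s. (a s)\<^sup>2 / deriv a s) \<longlongrightarrow> 0) (at_right 0)"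
      using tendsto_sandwich[OF b1 b2] by simp
    show ?thesis by (rule that[of 0]) (use l0 h in auto)
  qed
  have "SF a K L"
    by (unfold_locales) (use a0 smono ca even d1 d2 c2 pos1 Kbd K(1) L in auto)
  then show ?thesis by blast
qed

theorem theorem5p12:
  fixes a :: "real \<Rightarrow> real"
  assumes sr: "strongly_regular_scale_factor a"
    and even: "\<And>t. a (- t) = a t"
    and cases: "((deriv a \<longlongrightarrow> 0) (at_right 0) \<and>
                  (\<exists>\<epsilon>>0. \<forall>t. 0 < t \<and> t < \<epsilon> \<longrightarrow> deriv (deriv a) t \<ge> 0))
              \<or> (\<exists>L>0. (deriv a \<longlongrightarrow> L) (at_right 0))"
  shows "(\<forall>(\<tau>, \<rho>)\<in>domD a. (\<lambda>r. gtt a \<tau> r) differentiable (at \<rho>))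
       \<and> continuous_on (domD a) (\<lambda>(\<tau>, \<rho>). deriv (\<lambda>r. gtt a \<tau> r) \<rho>)"
proof -
  obtain K L where "SF a K L" using SF_intro[OF sr even cases] by blast
  then interpret SF a K L .
  have D: "\<And>\<tau> \<rho>. (\<tau>, \<rho>) \<in> domD a \<Longrightarrow> DERIV (\<lambda>r. gtt a \<tau> r) \<rho> :> Dg (\<tau>, \<rho>)"
    by (rule gtt_deriv)
  have part1: "\<forall>(\<tau>, \<rho>)\<in>domD a. (\<lambda>r. gtt a \<tau> r) differentiable (at \<rho>)"
    using D by (auto simp: real_differentiable_def)
  have "continuous_on (domD a) (\<lambda>(\<tau>, \<rho>). deriv (\<lambda>r. gtt a \<tau> r) \<rho>)"
  proof (rule continuous_on_cong[THEN iffD1, OF refl _ Dg_cont])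
    fix p assume p: "p \<in> domD a"
    obtain \<tau> \<rho> where pp: "p = (\<tau>, \<rho>)" by (cases p)
    have "deriv (\<lambda>r. gtt a \<tau> r) \<rho> = Dg (\<tau>, \<rho>)" using D[of \<tau> \<rho>] p pp by (intro DERIV_imp_deriv) simp
    then show "Dg p = (\<lambda>(\<tau>, \<rho>). deriv (\<lambda>r. gtt a \<tau> r) \<rho>) p" by (simp add: pp)
  qed
  with part1 show ?thesis by blast
qed


end
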